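(* Let $q$ be a power of an odd prime with $q\equiv 3 \pmod 4$, and let $d\equiv 3 \pmod 4$ be a positive integer. Let $P\subset \mathbb{F}_q^d$ be a set of points and let $S$ be a set of spheres in $\mathbb{F}_q^d$ all of whose radii are squares in $\mathbb{F}_q$. If $|P|\le N$ and $|S|\le N$, then \[ I(P,S)\ll q^{-1}N^2+q^{\frac{d-1}{2}}N. \]
   Context: A sphere in $\mathbb{F}_q^d$ with center $c=(c_1,\dots,c_d)\in\mathbb{F}_q^d$ and radius $r\in\mathbb{F}_q$ is the set $\{x\in\mathbb{F}_q^d : (x_1-c_1)^2+\cdots+(x_d-c_d)^2=r\}$; spheres are indexed by the pair (center, radius). A radius $r$ is a square if $r=t^2$ for some $t\in\mathbb{F}_q$. The number of incidences is $I(P,S)=\#\{(p,s)\in P\times S : p\in s\}$. $X\ll Y$ means $X\le C Y$ for an absolute constant $C>0$. *)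

theory Defs
  imports "HOL-Algebra.Algebra" "HOL-Computational_Algebra.Primes"
begin

definition fq_space :: "('a, 'b) ring_scheme \<Rightarrow> nat \<Rightarrow> 'a list set" where
  "fq_space R d = {x. length x = d \<and> set x \<subseteq> carrier R}"

definition fq_sphere :: "('a, 'b) ring_scheme \<Rightarrow> nat \<Rightarrow> 'a list \<times> 'a \<Rightarrow> 'a list set" where
  "fq_sphere R d s = {x \<in> fq_space R d.
     finsum R (\<lambda>i. (x ! i \<ominus>\<^bsub>R\<^esub> fst s ! i) \<otimes>\<^bsub>R\<^esub> (x ! i \<ominus>\<^bsub>R\<^esub> fst s ! i)) {..<d} = snd s}"

definition square_radius_spheres :: "('a, 'b) ring_scheme \<Rightarrow> nat \<Rightarrow> ('a list \<times> 'a) set" where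
  "square_radius_spheres R d =
     {(c, r). c \<in> fq_space R d \<and> r \<in> carrier R \<and> (\<exists>t\<in>carrier R. r = t \<otimes>\<^bsub>R\<^esub> t)}"

definition incidences :: "('a, 'b) ring_scheme \<Rightarrow> nat \<Rightarrow> 'a list set \<Rightarrow> ('a list \<times> 'a) set \<Rightarrow> nat" where
  "incidences R d P S = card {(p, s). p \<in> P \<and> s \<in> S \<and> p \<in> fq_sphere R d s}"

end

theory Submission
  imports Defs
begin


lemma even_invol:
  assumes "finite A" "\<forall>x\<in>A. f x \<in> A \<and> f (f x) = x \<and> f x \<noteq> x"
  shows "even (card A)"
  using assms
proof (induct "card A" arbitrary: A rule: less_induct)
  case less
  show ?case
  proof (cases "A = {}")
    case True then show ?thesis by simp
  next
    case False
    then obtain x where x: "x \<in> A" by auto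
    let ?B = "A - {x, f x}"
    have fx: "f x \<in> A" "f x \<noteq> x" using less.prems x by auto
    have sub: "{x, f x} \<subseteq> A" using x fx by auto
    have c2: "card {x, f x} = 2" using fx by simp
    have "card {x, f x} \<le> card A" using card_mono[OF less.prems(1) sub] .
    have cB: "card A = card ?B + 2"
      using card_Diff_subset[OF _ sub] less.prems(1) c2 \<open>card {x, f x} \<le> card A\<close>
      by (simp add: finite_subset[OF sub])
    have "even (card ?B)"
    proof (rule less.hyps)
      show "card ?B < card A" using cB by simp
      show "finite ?B" using less.prems by simp
      show "\<forall>y\<in>?B. f y \<in> ?B \<and> f (f y) = y \<and> f y \<noteq> y"
        using less.prems(2) x by (metis Diff_iff insert_iff singletonD)
    qed
    then show ?thesis using cB by simp
  qed
qed

locale ffq = field R for R :: "('a, 'b) ring_scheme" (structure) +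
  assumes finF: "finite (carrier R)" and q3: "card (carrier R) mod 4 = 3"
begin

abbreviation "q \<equiv> card (carrier R)"
definition "Sq = {x \<otimes> x | x. x \<in> carrier R}"
abbreviation "two \<equiv> \<one> \<oplus> \<one>"

lemma Sq_sub: "Sq \<subseteq> carrier R" unfolding Sq_def by auto
lemma zero_Sq: "\<zero> \<in> Sq" unfolding Sq_def by (auto intro!: exI[of _ \<zero>])
lemma sq_in_Sq: "x \<in> carrier R \<Longrightarrow> x \<otimes> x \<in> Sq" unfolding Sq_def by auto

lemma inv_cl: "a \<in> carrier R \<Longrightarrow> a \<noteq> \<zero> \<Longrightarrow> inv a \<in> carrier R"
  using field_Units by (auto intro: Units_inv_closed)
lemma rinv: "a \<in> carrier R \<Longrightarrow> a \<noteq> \<zero> \<Longrightarrow> a \<otimes> inv a = \<one>"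
  using field_Units by (auto intro: Units_r_inv)
lemma linv: "a \<in> carrier R \<Longrightarrow> a \<noteq> \<zero> \<Longrightarrow> inv a \<otimes> a = \<one>"
  using field_Units by (auto intro: Units_l_inv)
lemma inv_nz: "a \<in> carrier R \<Longrightarrow> a \<noteq> \<zero> \<Longrightarrow> inv a \<noteq> \<zero>"
  using rinv by fastforce

lemma q_odd: "odd q" using q3 by presburger

lemma two_nz: "two \<noteq> \<zero>"
proof
  assume h: "two = \<zero>"
  have "even q"
  proof (rule even_invol[OF finF, of "\<lambda>x. x \<oplus> \<one>"], intro ballI conjI)
    fix x assume x: "x \<in> carrier R"
    show "x \<oplus> \<one> \<in> carrier R" using x by simp
    have "x \<oplus> \<one> \<oplus> \<one> = x \<oplus> two" using x by algebra
    then show "x \<oplus> \<one> \<oplus> \<one> = x" using h x by simp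
    show "x \<oplus> \<one> \<noteq> x"
    proof
      assume "x \<oplus> \<one> = x"
      then have "x \<oplus> \<one> \<ominus> x = x \<ominus> x" by simp
      moreover have "x \<oplus> \<one> \<ominus> x = \<one>" "x \<ominus> x = \<zero>" using x by algebra+
      ultimately show False by simp
    qed
  qed
  then show False using q_odd by simp
qed

lemma two_cl: "two \<in> carrier R" by simp

lemma double_zero: "x \<in> carrier R \<Longrightarrow> x \<oplus> x = \<zero> \<Longrightarrow> x = \<zero>"
proof -
  assume x: "x \<in> carrier R" "x \<oplus> x = \<zero>"
  have "two \<otimes> x = x \<oplus> x" using x by algebra
  then show ?thesis using x two_nz integral_iff by auto
qed

lemma sq_eq: "x \<in> carrier R \<Longrightarrow> y \<in> carrier R \<Longrightarrow> (y \<otimes> y = x \<otimes> x) = (y = x \<or> y = \<ominus> x)"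
proof
  assume xy: "x \<in> carrier R" "y \<in> carrier R" "y \<otimes> y = x \<otimes> x"
  have "(y \<ominus> x) \<otimes> (y \<oplus> x) = y \<otimes> y \<ominus> x \<otimes> x" using xy by algebra
  also have "\<dots> = \<zero>" using xy by simp
  finally have "y \<ominus> x = \<zero> \<or> y \<oplus> x = \<zero>" using xy integral_iff by simp
  moreover have "y \<oplus> x = \<zero> \<Longrightarrow> y = \<ominus> x" using xy
    by (metis add.inv_closed add.m_assoc l_neg r_neg r_zero)
  ultimately show "y = x \<or> y = \<ominus> x" using xy by auto
next
  assume "x \<in> carrier R" "y \<in> carrier R" "y = x \<or> y = \<ominus> x"
  then show "y \<otimes> y = x \<otimes> x" by (auto simp: l_minus r_minus)
qed

definition "Sq0 = Sq - {\<zero>}"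

lemma card_Sq0: "2 * card Sq0 = q - 1"
proof -
  let ?f = "\<lambda>s. {y \<in> carrier R. y \<otimes> y = s}"
  have U: "carrier R - {\<zero>} = (\<Union>s\<in>Sq0. ?f s)"
  proof (intro equalityI subsetI)
    fix y assume "y \<in> carrier R - {\<zero>}"
    then show "y \<in> (\<Union>s\<in>Sq0. ?f s)" unfolding Sq0_def Sq_def using integral_iff by auto
  next
    fix y assume "y \<in> (\<Union>s\<in>Sq0. ?f s)"
    then show "y \<in> carrier R - {\<zero>}" unfolding Sq0_def by auto
  qed
  have c2: "card (?f s) = 2" if s: "s \<in> Sq0" for s
  proof -
    obtain x where x: "x \<in> carrier R" "s = x \<otimes> x" "s \<noteq> \<zero>" using s unfolding Sq0_def Sq_def by auto
    then have x0: "x \<noteq> \<zero>" by auto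
    have fs: "?f s = {x, \<ominus> x}" using x sq_eq by auto
    note x = x x0
    have "x \<noteq> \<ominus> x"
    proof
      assume h: "x = \<ominus> x"
      have "x \<oplus> x = x \<oplus> \<ominus> x" using arg_cong[OF h, of "\<lambda>y. x \<oplus> y"] .
      also have "x \<oplus> \<ominus> x = \<zero>" using x(1) by (rule r_neg)
      finally have "x \<oplus> x = \<zero>" .
      then show False using double_zero[OF x(1)] x(4) by blast
    qed
    then show ?thesis using fs by simp
  qed
  have "card (carrier R - {\<zero>}) = (\<Sum>s\<in>Sq0. card (?f s))"
    unfolding U
    by (rule card_UN_disjoint) (use finF Sq_sub in \<open>auto simp: Sq0_def intro: finite_subset\<close>)
  also have "\<dots> = (\<Sum>s\<in>Sq0. 2)" using c2 by simp
  finally show ?thesis using finF by simp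
qed

lemma card_Sq: "card Sq = card Sq0 + 1"
proof -
  have e: "Sq = insert \<zero> Sq0" using zero_Sq unfolding Sq0_def by auto
  have "finite Sq0" using finF Sq_sub unfolding Sq0_def by (auto intro: finite_subset)
  moreover have "\<zero> \<notin> Sq0" unfolding Sq0_def by auto
  ultimately show ?thesis by (subst e) simp
qed

lemma Sq0_odd: "odd (card Sq0)"
proof -
  have "q = 4 * (q div 4) + 3" using q3 div_mult_mod_eq[of q 4] by linarith
  then show ?thesis using card_Sq0 by presburger
qed

lemma minus_one_nonsq: "\<ominus> \<one> \<notin> Sq"
proof
  assume "\<ominus> \<one> \<in> Sq"
  then obtain i where i: "i \<in> carrier R" "\<ominus> \<one> = i \<otimes> i" unfolding Sq_def by auto
  have fS0: "finite Sq0" using finF Sq_sub unfolding Sq0_def by (auto intro: finite_subset)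
  have "even (card Sq0)"
  proof (rule even_invol[OF fS0, of "\<lambda>s. \<ominus> s"], intro ballI conjI)
    fix s assume s: "s \<in> Sq0"
    obtain x where x: "x \<in> carrier R" "s = x \<otimes> x" "s \<noteq> \<zero>" using s unfolding Sq0_def Sq_def by auto
    have "\<ominus> s = (i \<otimes> x) \<otimes> (i \<otimes> x)"
    proof -
      have "(i \<otimes> x) \<otimes> (i \<otimes> x) = (i \<otimes> i) \<otimes> (x \<otimes> x)" using i x by algebra
      also have "\<dots> = (\<ominus> \<one>) \<otimes> (x \<otimes> x)" using i by simp
      also have "\<dots> = \<ominus> s" using x by (simp add: l_minus)
      finally show ?thesis by simp
    qed
    then show "\<ominus> s \<in> Sq0" using x i unfolding Sq0_def Sq_def by auto
    show "\<ominus> (\<ominus> s) = s" using x by simp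
    show "\<ominus> s \<noteq> s"
    proof
      assume h: "\<ominus> s = s"
      have sR: "s \<in> carrier R" using x(1,2) by simp
      have "s \<oplus> s = s \<oplus> \<ominus> s" using arg_cong[OF h, of "\<lambda>y. s \<oplus> y"] by simp
      also have "s \<oplus> \<ominus> s = \<zero>" using sR by (rule r_neg)
      finally have "s \<oplus> s = \<zero>" .
      then show False using double_zero[OF sR] x(3) by blast
    qed
  qed
  then show False using Sq0_odd by simp
qed

lemma card_nonsq: "card (carrier R - Sq) = card Sq0"
proof -
  have "finite Sq" using finF Sq_sub by (auto intro: finite_subset)
  then have "card (carrier R - Sq) = q - card Sq" using finF Sq_sub by (simp add: card_Diff_subset)
  then show ?thesis using card_Sq card_Sq0 by simp
qed

lemma sum_two_sq: "c \<in> carrier R \<Longrightarrow> \<exists>u\<in>carrier R. \<exists>w\<in>carrier R. c = u \<otimes> u \<oplus> w \<otimes> w"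
proof -
  assume c: "c \<in> carrier R"
  let ?B = "(\<lambda>s. c \<ominus> s) ` Sq"
  have fS: "finite Sq" using finF Sq_sub by (auto intro: finite_subset)
  have inj: "inj_on (\<lambda>s. c \<ominus> s) Sq"
  proof (rule inj_onI)
    fix x y assume h: "x \<in> Sq" "y \<in> Sq" "c \<ominus> x = c \<ominus> y"
    then have xy: "x \<in> carrier R" "y \<in> carrier R" using Sq_sub by auto
    have "x = c \<ominus> (c \<ominus> x)" using xy c by algebra
    also have "\<dots> = c \<ominus> (c \<ominus> y)" using h by simp
    also have "\<dots> = y" using xy c by algebra
    finally show "x = y" .
  qed
  have cB: "card ?B = card Sq" using card_image[OF inj] .
  have Bsub: "?B \<subseteq> carrier R" using c Sq_sub by auto
  have "card (Sq \<union> ?B) \<le> q" using Bsub Sq_sub finF by (intro card_mono) auto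
  moreover have "card Sq + card ?B = card (Sq \<union> ?B) + card (Sq \<inter> ?B)"
    using card_Un_Int[OF fS finite_imageI[OF fS]] by auto
  moreover have "card Sq + card ?B = q + 1" using cB card_Sq card_Sq0 q_odd by presburger
  ultimately have "card (Sq \<inter> ?B) \<noteq> 0" by linarith
  then obtain z where "z \<in> Sq" "z \<in> ?B" by (metis card.empty disjoint_iff)
  then obtain u w where uw: "u \<in> carrier R" "w \<in> carrier R" "u \<otimes> u = c \<ominus> w \<otimes> w"
    unfolding Sq_def by auto
  have "u \<otimes> u \<oplus> w \<otimes> w = (c \<ominus> w \<otimes> w) \<oplus> w \<otimes> w" using uw by simp
  also have "\<dots> = c" using c uw by algebra
  finally have "u \<otimes> u \<oplus> w \<otimes> w = c" .
  then show ?thesis using uw by metis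
qed

lemma nonsq_mult:
  assumes a: "a \<in> carrier R - Sq" and b: "b \<in> carrier R - Sq"
  shows "a \<otimes> b \<in> Sq"
proof -
  have a0: "a \<noteq> \<zero>" using a zero_Sq by auto
  have aR: "a \<in> carrier R" using a by auto
  let ?M = "(\<lambda>s. a \<otimes> s) ` Sq0"
  have Msub: "?M \<subseteq> carrier R - Sq"
  proof
    fix z assume "z \<in> ?M"
    then obtain x where x: "x \<in> carrier R" "x \<otimes> x \<noteq> \<zero>" "z = a \<otimes> (x \<otimes> x)"
      unfolding Sq0_def Sq_def by auto
    then have x: "x \<in> carrier R" "x \<noteq> \<zero>" "z = a \<otimes> (x \<otimes> x)" by auto
    have "z \<notin> Sq"
    proof
      assume "z \<in> Sq"
      then obtain u where u: "u \<in> carrier R" "z = u \<otimes> u" unfolding Sq_def by auto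
      have "a = (u \<otimes> inv x) \<otimes> (u \<otimes> inv x)"
      proof -
        have ix: "inv x \<in> carrier R" using inv_cl x by simp
        have "(u \<otimes> inv x) \<otimes> (u \<otimes> inv x) = (u \<otimes> u) \<otimes> (inv x \<otimes> inv x)"
          using u x ix by algebra
        also have "\<dots> = (a \<otimes> (x \<otimes> x)) \<otimes> (inv x \<otimes> inv x)"
          using u(2) x(3) by simp
        also have "\<dots> = a \<otimes> ((x \<otimes> inv x) \<otimes> (x \<otimes> inv x))"
          using x(1) ix aR by algebra
        also have "\<dots> = a" using rinv x a by simp
        finally show ?thesis by simp
      qed
      then show False using a u x inv_cl sq_in_Sq by auto
    qed
    then show "z \<in> carrier R - Sq" using x a by auto
  qed
  have inj: "inj_on (\<lambda>s. a \<otimes> s) Sq0"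
  proof (rule inj_onI)
    fix x y assume h: "x \<in> Sq0" "y \<in> Sq0" "a \<otimes> x = a \<otimes> y"
    then have "x \<in> carrier R" "y \<in> carrier R" using Sq_sub unfolding Sq0_def by auto
    then show "x = y" using m_lcancel[OF a0 aR] h(3) by simp
  qed
  have "card ?M = card (carrier R - Sq)" using card_image[OF inj] card_nonsq by simp
  then have "?M = carrier R - Sq" using Msub finF by (intro card_subset_eq) auto
  then obtain x where x: "x \<in> carrier R" "b = a \<otimes> (x \<otimes> x)" using b unfolding Sq0_def Sq_def by auto
  have eq: "a \<otimes> b = (a \<otimes> x) \<otimes> (a \<otimes> x)" unfolding x(2) using x(1) aR by algebra
  have "a \<otimes> x \<in> carrier R" using x(1) aR by simp
  then have "(a \<otimes> x) \<otimes> (a \<otimes> x) \<in> Sq" by (rule sq_in_Sq)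
  then show ?thesis by (subst eq)
qed

end


fun qf :: "('a, 'b) ring_scheme \<Rightarrow> 'a list \<Rightarrow> 'a" where
  "qf R [] = \<zero>\<^bsub>R\<^esub>"
| "qf R (a # xs) = a \<otimes>\<^bsub>R\<^esub> a \<oplus>\<^bsub>R\<^esub> qf R xs"

fun dotp :: "('a, 'b) ring_scheme \<Rightarrow> 'a list \<Rightarrow> 'a list \<Rightarrow> 'a" where
  "dotp R (a # xs) (b # ys) = a \<otimes>\<^bsub>R\<^esub> b \<oplus>\<^bsub>R\<^esub> dotp R xs ys"
| "dotp R _ _ = \<zero>\<^bsub>R\<^esub>"

definition vsub :: "('a, 'b) ring_scheme \<Rightarrow> 'a list \<Rightarrow> 'a list \<Rightarrow> 'a list" where
  "vsub R x y = map2 (\<lambda>a b. a \<ominus>\<^bsub>R\<^esub> b) x y"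
definition vadd :: "('a, 'b) ring_scheme \<Rightarrow> 'a list \<Rightarrow> 'a list \<Rightarrow> 'a list" where
  "vadd R x y = map2 (\<lambda>a b. a \<oplus>\<^bsub>R\<^esub> b) x y"
definition smul :: "('a, 'b) ring_scheme \<Rightarrow> 'a \<Rightarrow> 'a list \<Rightarrow> 'a list" where
  "smul R c x = map (\<lambda>a. c \<otimes>\<^bsub>R\<^esub> a) x"

lemma vsub_Cons[simp]: "vsub R (a # x) (b # y) = (a \<ominus>\<^bsub>R\<^esub> b) # vsub R x y"
  by (simp add: vsub_def)
lemma vadd_Cons[simp]: "vadd R (a # x) (b # y) = (a \<oplus>\<^bsub>R\<^esub> b) # vadd R x y"
  by (simp add: vadd_def)
lemma smul_Cons[simp]: "smul R c (a # x) = (c \<otimes>\<^bsub>R\<^esub> a) # smul R c x"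
  by (simp add: smul_def)
lemma vsub_Nil[simp]: "vsub R [] y = []" "vadd R [] y = []" "smul R c [] = []"
  by (simp_all add: vsub_def vadd_def smul_def)

context ffq begin

abbreviation "V n \<equiv> fq_space R n"

lemma V_Cons: "(a # x \<in> V (Suc n)) = (a \<in> carrier R \<and> x \<in> V n)"
  unfolding fq_space_def by auto
lemma V_0: "V 0 = {[]}" unfolding fq_space_def by auto
lemma V_Suc_cases: "x \<in> V (Suc n) \<Longrightarrow> \<exists>a y. x = a # y \<and> a \<in> carrier R \<and> y \<in> V n"
  unfolding fq_space_def by (cases x) auto

lemma finV: "finite (V n)"
  unfolding fq_space_def using finite_lists_length_eq[OF finF, of n] by (simp add: conj_commute)
lemma cardV: "card (V n) = q ^ n"
  unfolding fq_space_def using card_lists_length_eq[OF finF, of n] by (simp add: conj_commute)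

lemma qf_cl: "set x \<subseteq> carrier R \<Longrightarrow> qf R x \<in> carrier R"
  by (induct x) auto
lemma dot_cl: "set x \<subseteq> carrier R \<Longrightarrow> set y \<subseteq> carrier R \<Longrightarrow> dotp R x y \<in> carrier R"
proof (induct x arbitrary: y)
  case (Cons a x) then show ?case by (cases y) auto
qed simp

lemma V_cl: "x \<in> V n \<Longrightarrow> set x \<subseteq> carrier R" unfolding fq_space_def by auto
lemma V_len: "x \<in> V n \<Longrightarrow> length x = n" unfolding fq_space_def by auto

lemma vsub_V: "x \<in> V n \<Longrightarrow> y \<in> V n \<Longrightarrow> vsub R x y \<in> V n"
proof (induct n arbitrary: x y)
  case 0 then show ?case using V_0 by auto
next
  case (Suc n)
  then obtain a x' b y' where "x = a # x'" "y = b # y'" "a \<in> carrier R" "b \<in> carrier R" "x' \<in> V n" "y' \<in> V n"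
    using V_Suc_cases by meson
  then show ?case using Suc.hyps V_Cons by simp
qed

lemma vadd_V: "x \<in> V n \<Longrightarrow> y \<in> V n \<Longrightarrow> vadd R x y \<in> V n"
proof (induct n arbitrary: x y)
  case 0 then show ?case using V_0 by auto
next
  case (Suc n)
  then obtain a x' b y' where "x = a # x'" "y = b # y'" "a \<in> carrier R" "b \<in> carrier R" "x' \<in> V n" "y' \<in> V n"
    using V_Suc_cases by meson
  then show ?case using Suc.hyps V_Cons by simp
qed

lemma smul_V: "c \<in> carrier R \<Longrightarrow> x \<in> V n \<Longrightarrow> smul R c x \<in> V n"
proof (induct n arbitrary: x)
  case 0 then show ?case using V_0 by auto
next
  case (Suc n)
  then obtain a x' where "x = a # x'" "a \<in> carrier R" "x' \<in> V n"
    using V_Suc_cases by meson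
  then show ?case using Suc V_Cons by simp
qed

lemma finsum_qf:
  "x \<in> V n \<Longrightarrow> c \<in> V n \<Longrightarrow>
   finsum R (\<lambda>i. (x ! i \<ominus> c ! i) \<otimes> (x ! i \<ominus> c ! i)) {..<n} = qf R (vsub R x c)"
proof (induct n arbitrary: x c)
  case 0 then show ?case using V_0 by simp
next
  case (Suc n)
  then obtain a x' b c' where xc: "x = a # x'" "c = b # c'" "a \<in> carrier R" "b \<in> carrier R" "x' \<in> V n" "c' \<in> V n"
    using V_Suc_cases by meson
  let ?g = "\<lambda>i. (x ! i \<ominus> c ! i) \<otimes> (x ! i \<ominus> c ! i)"
  have gcl: "?g \<in> {..<Suc n} \<rightarrow> carrier R"
  proof
    fix i assume "i \<in> {..<Suc n}"
    then have "x ! i \<in> carrier R" "c ! i \<in> carrier R" using Suc.prems V_cl V_len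
      by (metis lessThan_iff nth_mem subsetD)+
    then show "?g i \<in> carrier R" by simp
  qed
  have "finsum R ?g {..<Suc n} = finsum R ?g (insert 0 (Suc ` {..<n}))"
    by (simp add: lessThan_Suc_eq_insert_0)
  also have "\<dots> = ?g 0 \<oplus> finsum R ?g (Suc ` {..<n})"
    by (rule finsum_insert) (use gcl in \<open>auto simp: lessThan_Suc_eq_insert_0\<close>)
  also have "finsum R ?g (Suc ` {..<n}) = finsum R (\<lambda>i. ?g (Suc i)) {..<n}"
    by (rule finsum_reindex) (use gcl in \<open>auto simp: lessThan_Suc_eq_insert_0\<close>)
  also have "\<dots> = finsum R (\<lambda>i. (x' ! i \<ominus> c' ! i) \<otimes> (x' ! i \<ominus> c' ! i)) {..<n}"
    using xc by simp
  also have "\<dots> = qf R (vsub R x' c')" using Suc.hyps xc by simp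
  finally show ?case using xc by simp
qed

lemma sphere_iff:
  assumes "c \<in> V d"
  shows "x \<in> fq_sphere R d (c, r) \<longleftrightarrow> x \<in> V d \<and> qf R (vsub R x c) = r"
  unfolding fq_sphere_def using finsum_qf[OF _ assms] by auto

definition "Nc n a = card {x \<in> V n. qf R x = a}"

lemma Nc_Suc: "a \<in> carrier R \<Longrightarrow> Nc (Suc n) a = (\<Sum>u\<in>carrier R. Nc n (a \<ominus> u \<otimes> u))"
proof -
  assume a: "a \<in> carrier R"
  have U: "{x \<in> V (Suc n). qf R x = a} = (\<Union>u\<in>carrier R. (\<lambda>y. u # y) ` {y \<in> V n. qf R y = a \<ominus> u \<otimes> u})"
  proof (intro equalityI subsetI)
    fix x assume "x \<in> {x \<in> V (Suc n). qf R x = a}"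
    then obtain u y where uy: "x = u # y" "u \<in> carrier R" "y \<in> V n" "qf R x = a"
      using V_Suc_cases by blast
    have "qf R y = a \<ominus> u \<otimes> u"
    proof -
      have yc: "qf R y \<in> carrier R" using qf_cl V_cl uy(3) by blast
      have "a = u \<otimes> u \<oplus> qf R y" using uy by simp
      then have "a \<ominus> u \<otimes> u = (u \<otimes> u \<oplus> qf R y) \<ominus> u \<otimes> u" by simp
      also have "\<dots> = qf R y" using yc uy(2) by algebra
      finally show ?thesis by simp
    qed
    then show "x \<in> (\<Union>u\<in>carrier R. (\<lambda>y. u # y) ` {y \<in> V n. qf R y = a \<ominus> u \<otimes> u})"
      using uy by auto
  next
    fix x assume "x \<in> (\<Union>u\<in>carrier R. (\<lambda>y. u # y) ` {y \<in> V n. qf R y = a \<ominus> u \<otimes> u})"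
    then obtain u y where uy: "x = u # y" "u \<in> carrier R" "y \<in> V n" "qf R y = a \<ominus> u \<otimes> u" by auto
    have "qf R x = u \<otimes> u \<oplus> (a \<ominus> u \<otimes> u)" using uy by simp
    also have "\<dots> = a" using a uy(2) by algebra
    finally show "x \<in> {x \<in> V (Suc n). qf R x = a}" using uy V_Cons by simp
  qed
  have "card {x \<in> V (Suc n). qf R x = a} = (\<Sum>u\<in>carrier R. card ((\<lambda>y. u # y) ` {y \<in> V n. qf R y = a \<ominus> u \<otimes> u}))"
    unfolding U
    by (rule card_UN_disjoint) (use finF finV in auto)
  also have "\<dots> = (\<Sum>u\<in>carrier R. Nc n (a \<ominus> u \<otimes> u))"
    unfolding Nc_def by (intro sum.cong refl card_image) (auto intro: inj_onI)
  finally show ?thesis unfolding Nc_def .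
qed

lemma sum_Nc: "(\<Sum>c\<in>carrier R. Nc n c) = q ^ n"
proof -
  have "(\<Sum>c\<in>carrier R. Nc n c) = (\<Sum>c\<in>carrier R. \<Sum>x\<in>{x \<in> V n. qf R x = c}. 1)"
    unfolding Nc_def by simp
  also have "\<dots> = (\<Sum>x\<in>V n. 1)"
    by (rule sum.group) (use finF finV qf_cl V_cl in auto)
  also have "\<dots> = q ^ n" using cardV by simp
  finally show ?thesis .
qed

lemma sum_shift: "a \<in> carrier R \<Longrightarrow> (\<Sum>b\<in>carrier R. f (a \<ominus> b)) = (\<Sum>c\<in>carrier R. f c)"
proof -
  assume a: "a \<in> carrier R"
  have "bij_betw (\<lambda>b. a \<ominus> b) (carrier R) (carrier R)"
  proof (rule bij_betwI[where g="\<lambda>b. a \<ominus> b"])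
    show "(\<lambda>b. a \<ominus> b) \<in> carrier R \<rightarrow> carrier R" using a by auto
    show "(\<lambda>b. a \<ominus> b) \<in> carrier R \<rightarrow> carrier R" using a by auto
    fix x assume "x \<in> carrier R"
    then show "a \<ominus> (a \<ominus> x) = x" "a \<ominus> (a \<ominus> x) = x" using a by algebra+
  qed
  then show ?thesis by (rule sum.reindex_bij_betw)
qed

definition "P2 b = card {p \<in> carrier R \<times> carrier R. fst p \<otimes> fst p \<oplus> snd p \<otimes> snd p = b}"

lemma P2_zero: "P2 \<zero> = 1"
proof -
  have "{p \<in> carrier R \<times> carrier R. fst p \<otimes> fst p \<oplus> snd p \<otimes> snd p = \<zero>} = {(\<zero>, \<zero>)}"
  proof (intro equalityI subsetI)
    fix p assume p: "p \<in> {p \<in> carrier R \<times> carrier R. fst p \<otimes> fst p \<oplus> snd p \<otimes> snd p = \<zero>}"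
    obtain u w where uw: "p = (u, w)" "u \<in> carrier R" "w \<in> carrier R" "u \<otimes> u \<oplus> w \<otimes> w = \<zero>"
      using p by auto
    have w0: "w = \<zero>"
    proof (rule ccontr)
      assume w: "w \<noteq> \<zero>"
      have iw: "inv w \<in> carrier R" using inv_cl uw(3) w by simp
      have "(u \<otimes> inv w) \<otimes> (u \<otimes> inv w) = (u \<otimes> u) \<otimes> (inv w \<otimes> inv w)" using uw iw by algebra
      also have "u \<otimes> u = \<ominus> (w \<otimes> w)"
      proof -
        have "u \<otimes> u = (u \<otimes> u \<oplus> w \<otimes> w) \<ominus> w \<otimes> w" using uw(2,3) by algebra
        also have "\<dots> = \<zero> \<ominus> w \<otimes> w" using uw(4) by simp
        also have "\<dots> = \<ominus> (w \<otimes> w)" using uw(3) by algebra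
        finally show ?thesis .
      qed
      also have "\<ominus> (w \<otimes> w) \<otimes> (inv w \<otimes> inv w) = \<ominus> ((w \<otimes> inv w) \<otimes> (w \<otimes> inv w))"
        using uw iw by algebra
      also have "\<dots> = \<ominus> \<one>" using rinv uw(3) w by simp
      finally have "\<ominus> \<one> \<in> Sq" using sq_in_Sq[of "u \<otimes> inv w"] uw iw by simp
      then show False using minus_one_nonsq by simp
    qed
    have "u \<otimes> u = \<zero>" using uw w0 by simp
    then have "u = \<zero>" using uw integral_iff by auto
    then show "p \<in> {(\<zero>, \<zero>)}" using uw w0 by simp
  qed simp
  then show ?thesis unfolding P2_def by simp
qed

lemma P2_le:
  assumes b: "b \<in> carrier R" "b \<noteq> \<zero>" and b': "b' \<in> carrier R" "b' \<noteq> \<zero>"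
  shows "P2 b \<le> P2 b'"
proof -
  have ib: "inv b \<in> carrier R" using inv_cl b by simp
  let ?c = "b' \<otimes> inv b"
  have cc: "?c \<in> carrier R" using ib b' by simp
  have c0: "?c \<noteq> \<zero>" using ib b' b inv_nz integral_iff by auto
  obtain u w where uw: "u \<in> carrier R" "w \<in> carrier R" "?c = u \<otimes> u \<oplus> w \<otimes> w"
    using sum_two_sq[OF cc] by blast
  let ?f = "\<lambda>p. (fst p \<otimes> u \<ominus> snd p \<otimes> w, fst p \<otimes> w \<oplus> snd p \<otimes> u)"
  let ?A = "{p \<in> carrier R \<times> carrier R. fst p \<otimes> fst p \<oplus> snd p \<otimes> snd p = b}"
  let ?B = "{p \<in> carrier R \<times> carrier R. fst p \<otimes> fst p \<oplus> snd p \<otimes> snd p = b'}"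
  have img: "?f ` ?A \<subseteq> ?B"
  proof
    fix z assume "z \<in> ?f ` ?A"
    then obtain x y where xy: "z = ?f (x, y)" "x \<in> carrier R" "y \<in> carrier R" "x \<otimes> x \<oplus> y \<otimes> y = b" by auto
    have "(x \<otimes> u \<ominus> y \<otimes> w) \<otimes> (x \<otimes> u \<ominus> y \<otimes> w) \<oplus> (x \<otimes> w \<oplus> y \<otimes> u) \<otimes> (x \<otimes> w \<oplus> y \<otimes> u)
        = (x \<otimes> x \<oplus> y \<otimes> y) \<otimes> (u \<otimes> u \<oplus> w \<otimes> w)" using xy(2,3) uw(1,2) by algebra
    also have "\<dots> = b \<otimes> (b' \<otimes> inv b)" using xy(4) uw(3) by simp
    also have "\<dots> = b' \<otimes> (b \<otimes> inv b)" using b b' ib by algebra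
    also have "\<dots> = b'" using rinv b b' by simp
    finally show "z \<in> ?B" using xy uw by simp
  qed
  have inj: "inj_on ?f ?A"
  proof (rule inj_onI)
    fix p p' assume p: "p \<in> ?A" "p' \<in> ?A" "?f p = ?f p'"
    obtain x y x' y' where pp: "p = (x, y)" "p' = (x', y')" "x \<in> carrier R" "y \<in> carrier R"
      "x' \<in> carrier R" "y' \<in> carrier R" using p by auto
    have e1: "x \<otimes> u \<ominus> y \<otimes> w = x' \<otimes> u \<ominus> y' \<otimes> w" and e2: "x \<otimes> w \<oplus> y \<otimes> u = x' \<otimes> w \<oplus> y' \<otimes> u"
      using p(3) pp by simp_all
    have "(x \<ominus> x') \<otimes> ?c = u \<otimes> ((x \<otimes> u \<ominus> y \<otimes> w) \<ominus> (x' \<otimes> u \<ominus> y' \<otimes> w)) \<oplus> w \<otimes> ((x \<otimes> w \<oplus> y \<otimes> u) \<ominus> (x' \<otimes> w \<oplus> y' \<otimes> u))"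
      unfolding uw(3) using pp(3-6) uw(1,2) by algebra
    also have "\<dots> = \<zero>" unfolding e1 e2 using pp(3-6) uw(1,2) by algebra
    finally have "x \<ominus> x' = \<zero>" using integral_iff c0 cc pp by simp
    then have xx: "x = x'" using pp by simp
    have "(y \<ominus> y') \<otimes> ?c = u \<otimes> ((x \<otimes> w \<oplus> y \<otimes> u) \<ominus> (x' \<otimes> w \<oplus> y' \<otimes> u)) \<ominus> w \<otimes> ((x \<otimes> u \<ominus> y \<otimes> w) \<ominus> (x' \<otimes> u \<ominus> y' \<otimes> w))"
      unfolding uw(3) xx using pp(3-6) uw(1,2) by algebra
    also have "\<dots> = \<zero>" unfolding e1 e2 using pp(3-6) uw(1,2) by algebra
    finally have "y \<ominus> y' = \<zero>" using integral_iff c0 cc pp by simp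
    then have "y = y'" using pp by simp
    then show "p = p'" using pp xx by simp
  qed
  have "finite ?B" using finF by (auto intro: finite_subset[of _ "carrier R \<times> carrier R"])
  then have "card (?f ` ?A) \<le> card ?B" using img card_mono by blast
  then show ?thesis unfolding P2_def using card_image[OF inj] by simp
qed

lemma sum_P2: "(\<Sum>b\<in>carrier R. P2 b) = q * q"
proof -
  have "(\<Sum>b\<in>carrier R. P2 b) = (\<Sum>b\<in>carrier R. \<Sum>p\<in>{p \<in> carrier R \<times> carrier R. fst p \<otimes> fst p \<oplus> snd p \<otimes> snd p = b}. 1)"
    unfolding P2_def by simp
  also have "\<dots> = (\<Sum>p\<in>carrier R \<times> carrier R. 1)"
    by (rule sum.group) (use finF in auto)
  also have "\<dots> = q * q" by (simp add: card_cartesian_product)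
  finally show ?thesis .
qed

lemma P2_nz: "b \<in> carrier R \<Longrightarrow> b \<noteq> \<zero> \<Longrightarrow> P2 b = q + 1"
proof -
  assume b: "b \<in> carrier R" "b \<noteq> \<zero>"
  have eq: "P2 c = P2 b" if "c \<in> carrier R - {\<zero>}" for c
    using P2_le[of b c] P2_le[of c b] b that by auto
  have "q * q = (\<Sum>c\<in>carrier R. P2 c)" using sum_P2 by simp
  also have "\<dots> = P2 \<zero> + (\<Sum>c\<in>carrier R - {\<zero>}. P2 c)"
    using finF by (simp add: sum.remove)
  also have "\<dots> = 1 + (q - 1) * P2 b" using eq P2_zero finF by simp
  finally have "q * q = 1 + (q - 1) * P2 b" .
  moreover have "q \<ge> 3" using q3 by (metis mod_less_eq_dividend)
  ultimately have "int (q * q) = int (1 + (q - 1) * P2 b)" by simp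
  then have "int q * int q = 1 + (int q - 1) * int (P2 b)"
    using \<open>q \<ge> 3\<close> by (simp add: of_nat_diff)
  then have "(int q - 1) * (int q + 1) = (int q - 1) * int (P2 b)"
    by (simp add: algebra_simps)
  then have "int q + 1 = int (P2 b)" using \<open>q \<ge> 3\<close> by simp
  then show ?thesis using \<open>q \<ge> 3\<close> by simp
qed

end


context ffq begin

lemma Nc_SS: assumes a: "a \<in> carrier R"
  shows "int (Nc (Suc (Suc n)) a) = (int q + 1) * int q ^ n - int q * int (Nc n a)"
proof -
  let ?h = "\<lambda>p. fst p \<otimes> fst p \<oplus> snd p \<otimes> snd p"
  let ?S = "carrier R \<times> carrier R"
  have "Nc (Suc (Suc n)) a = (\<Sum>u\<in>carrier R. \<Sum>w\<in>carrier R. Nc n (a \<ominus> u \<otimes> u \<ominus> w \<otimes> w))"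
    using Nc_Suc[OF a] Nc_Suc a by simp
  also have "\<dots> = (\<Sum>u\<in>carrier R. \<Sum>w\<in>carrier R. Nc n (a \<ominus> ?h (u, w)))"
  proof (intro sum.cong refl)
    fix u w assume "u \<in> carrier R" "w \<in> carrier R"
    then have "a \<ominus> u \<otimes> u \<ominus> w \<otimes> w = a \<ominus> ?h (u, w)" using a by simp algebra
    then show "Nc n (a \<ominus> u \<otimes> u \<ominus> w \<otimes> w) = Nc n (a \<ominus> ?h (u, w))" by simp
  qed
  also have "\<dots> = (\<Sum>p\<in>?S. Nc n (a \<ominus> ?h p))"
    by (subst sum.cartesian_product) (simp add: case_prod_beta)
  also have "\<dots> = (\<Sum>b\<in>carrier R. \<Sum>p\<in>{p \<in> ?S. ?h p = b}. Nc n (a \<ominus> ?h p))"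
    by (rule sum.group[symmetric]) (use finF in auto)
  also have "\<dots> = (\<Sum>b\<in>carrier R. P2 b * Nc n (a \<ominus> b))"
    unfolding P2_def by (intro sum.cong refl) simp
  finally have e1: "Nc (Suc (Suc n)) a = (\<Sum>b\<in>carrier R. P2 b * Nc n (a \<ominus> b))" .
  have "int (\<Sum>b\<in>carrier R. P2 b * Nc n (a \<ominus> b))
      = int (P2 \<zero> * Nc n (a \<ominus> \<zero>)) + (\<Sum>b\<in>carrier R - {\<zero>}. int (P2 b * Nc n (a \<ominus> b)))"
    using sum.remove[OF finF zero_closed, of "\<lambda>b. int (P2 b * Nc n (a \<ominus> b))"] by simp
  also have "\<dots> = int (Nc n a) + (\<Sum>b\<in>carrier R - {\<zero>}. (int q + 1) * int (Nc n (a \<ominus> b)))"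
  proof -
    have "int (P2 \<zero> * Nc n (a \<ominus> \<zero>)) = int (Nc n a)" using P2_zero a by (simp add: a_minus_def)
    moreover have "(\<Sum>b\<in>carrier R - {\<zero>}. int (P2 b * Nc n (a \<ominus> b)))
       = (\<Sum>b\<in>carrier R - {\<zero>}. (int q + 1) * int (Nc n (a \<ominus> b)))"
      by (intro sum.cong refl) (simp add: P2_nz algebra_simps)
    ultimately show ?thesis by simp
  qed
  also have "(\<Sum>b\<in>carrier R - {\<zero>}. (int q + 1) * int (Nc n (a \<ominus> b)))
      = (\<Sum>b\<in>carrier R. (int q + 1) * int (Nc n (a \<ominus> b))) - (int q + 1) * int (Nc n a)"
    using sum.remove[OF finF zero_closed, of "\<lambda>b. (int q + 1) * int (Nc n (a \<ominus> b))"] a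
    by (simp add: a_minus_def)
  also have "(\<Sum>b\<in>carrier R. (int q + 1) * int (Nc n (a \<ominus> b))) = (int q + 1) * int q ^ n"
  proof -
    have "(\<Sum>b\<in>carrier R. int (Nc n (a \<ominus> b))) = (\<Sum>c\<in>carrier R. int (Nc n c))"
      using sum_shift[OF a, of "\<lambda>c. int (Nc n c)"] .
    also have "\<dots> = int q ^ n" using sum_Nc[of n] by (metis of_nat_power of_nat_sum)
    finally show ?thesis by (simp add: sum_distrib_left[symmetric])
  qed
  finally have e2: "int (Nc (Suc (Suc n)) a) = int (Nc n a) + ((int q + 1) * int q ^ n - (int q + 1) * int (Nc n a))"
    unfolding e1 .
  have "(int q + 1) * int (Nc n a) = int q * int (Nc n a) + int (Nc n a)" by (simp add: distrib_right)
  then show ?thesis using e2 by linarith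
qed

lemma Nc_0: "Nc 0 c = (if c = \<zero> then 1 else 0)"
proof -
  have "{x \<in> V 0. qf R x = c} = {x \<in> {[]}. qf R x = c}" using V_0 by simp
  also have "\<dots> = (if c = \<zero> then {[]} else {})" by auto
  finally show ?thesis unfolding Nc_def by simp
qed

lemma Nc_1_0: "Nc 1 \<zero> = 1"
proof -
  have "Nc 1 \<zero> = (\<Sum>u\<in>carrier R. Nc 0 (\<zero> \<ominus> u \<otimes> u))" using Nc_Suc[of \<zero> 0] by simp
  also have "\<dots> = (\<Sum>u\<in>carrier R. if u = \<zero> then 1 else 0)"
  proof (intro sum.cong refl)
    fix u assume u: "u \<in> carrier R"
    have "(\<zero> \<ominus> u \<otimes> u = \<zero>) = (u \<otimes> u = \<zero>)" using u by (metis m_closed r_right_minus_eq zero_closed)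
    also have "\<dots> = (u = \<zero>)" using u integral_iff by auto
    finally show "Nc 0 (\<zero> \<ominus> u \<otimes> u) = (if u = \<zero> then 1 else 0)" using Nc_0 by simp
  qed
  also have "\<dots> = 1" using finF by (simp add: sum.delta)
  finally show ?thesis .
qed

lemma Nc_1_sq: assumes r: "r \<in> carrier R" "r \<noteq> \<zero>"
  shows "Nc 1 (r \<otimes> r) = 2"
proof -
  have "Nc 1 (r \<otimes> r) = (\<Sum>u\<in>carrier R. Nc 0 (r \<otimes> r \<ominus> u \<otimes> u))" using Nc_Suc[of "r \<otimes> r" 0] r by simp
  also have "\<dots> = (\<Sum>u\<in>carrier R. if u \<in> {r, \<ominus> r} then 1 else 0)"
  proof (intro sum.cong refl)
    fix u assume u: "u \<in> carrier R"
    have "(r \<otimes> r \<ominus> u \<otimes> u = \<zero>) = (u \<otimes> u = r \<otimes> r)" using u r by (metis m_closed r_right_minus_eq)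
    also have "\<dots> = (u \<in> {r, \<ominus> r})" using sq_eq u r by auto
    finally show "Nc 0 (r \<otimes> r \<ominus> u \<otimes> u) = (if u \<in> {r, \<ominus> r} then 1 else 0)" using Nc_0 by simp
  qed
  also have "\<dots> = card {r, \<ominus> r}"
  proof -
    have "carrier R \<inter> {u. u = r \<or> u = \<ominus> r} = {r, \<ominus> r}" using r by auto
    then show ?thesis using finF by (simp add: sum.If_cases)
  qed
  also have "r \<noteq> \<ominus> r"
  proof
    assume h: "r = \<ominus> r"
    have "r \<oplus> r = r \<oplus> \<ominus> r" using arg_cong[OF h, of "\<lambda>y. r \<oplus> y"] .
    also have "r \<oplus> \<ominus> r = \<zero>" using r(1) by (rule r_neg)
    finally show False using double_zero[OF r(1)] r(2) by blast
  qed
  then have "card {r, \<ominus> r} = 2" by simp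
  finally show ?thesis .
qed

lemma Nc_odd: "a \<in> carrier R \<Longrightarrow>
  int (Nc (2 * k + 1) a) = int q ^ (2 * k) + (- int q) ^ k * (int (Nc 1 a) - 1)"
proof (induct k)
  case 0 then show ?case by simp
next
  case (Suc k)
  have "2 * Suc k + 1 = Suc (Suc (2 * k + 1))" by simp
  then have "int (Nc (2 * Suc k + 1) a) = (int q + 1) * int q ^ (2 * k + 1) - int q * int (Nc (2 * k + 1) a)"
    using Nc_SS[OF Suc.prems] by simp
  also have "\<dots> = (int q + 1) * int q ^ (2 * k + 1) - int q * (int q ^ (2 * k) + (- int q) ^ k * (int (Nc 1 a) - 1))"
    using Suc by simp
  also have "\<dots> = int q ^ (2 * Suc k) + (- int q) ^ Suc k * (int (Nc 1 a) - 1)"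
    by (simp only: power_add power_Suc mult_2 algebra_simps) (simp add: algebra_simps)
  finally show ?case .
qed

lemma sphere_count_0: "d mod 4 = 3 \<Longrightarrow> int (Nc d \<zero>) = int q ^ (d - 1)"
proof -
  assume d: "d mod 4 = 3"
  define k where "k = d div 2"
  have k: "d = 2 * k + 1" unfolding k_def using d by presburger
  show ?thesis using Nc_odd[of \<zero> k] Nc_1_0 k by simp
qed

lemma sphere_count_sq: "d mod 4 = 3 \<Longrightarrow> r \<in> carrier R \<Longrightarrow> r \<noteq> \<zero> \<Longrightarrow>
   int (Nc d (r \<otimes> r)) = int q ^ (d - 1) - int q ^ ((d - 1) div 2)"
proof -
  assume d: "d mod 4 = 3" and r: "r \<in> carrier R" "r \<noteq> \<zero>"
  define k where "k = d div 2"
  have k: "d = 2 * k + 1" unfolding k_def using d by presburger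
  have "odd k" using d k by presburger
  then have "(- int q) ^ k = - (int q ^ k)" by (simp add: power_minus_odd)
  then show ?thesis using Nc_odd[of "r \<otimes> r" k] Nc_1_sq[OF r] k r by simp
qed

end


context ffq begin

lemma V_induct2[consumes 2, case_names Nil Cons]:
  assumes "x \<in> V n" "y \<in> V n"
    and "P [] []"
    and "\<And>a b x y n. a \<in> carrier R \<Longrightarrow> b \<in> carrier R \<Longrightarrow> x \<in> V n \<Longrightarrow> y \<in> V n \<Longrightarrow> P x y \<Longrightarrow> P (a # x) (b # y)"
  shows "P x y"
  using assms(1,2)
proof (induct n arbitrary: x y)
  case 0 then show ?case using V_0 assms(3) by auto
next
  case (Suc n)
  then obtain a x' b y' where "x = a # x'" "y = b # y'" "a \<in> carrier R" "b \<in> carrier R" "x' \<in> V n" "y' \<in> V n"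
    using V_Suc_cases by meson
  then show ?case using Suc.hyps assms(4) by blast
qed

lemma V_induct1[consumes 1, case_names Nil Cons]:
  assumes "x \<in> V n"
    and "P []"
    and "\<And>a x n. a \<in> carrier R \<Longrightarrow> x \<in> V n \<Longrightarrow> P x \<Longrightarrow> P (a # x)"
  shows "P x"
  using assms(1)
proof (induct n arbitrary: x)
  case 0 then show ?case using V_0 assms(2) by auto
next
  case (Suc n)
  then obtain a x' where "x = a # x'" "a \<in> carrier R" "x' \<in> V n"
    using V_Suc_cases by meson
  then show ?case using Suc.hyps assms(3) by blast
qed

lemma qf_shift: "y \<in> V n \<Longrightarrow> v \<in> V n \<Longrightarrow> m \<in> carrier R \<Longrightarrow>
  qf R (vadd R y (smul R m v)) = qf R y \<oplus> two \<otimes> m \<otimes> dotp R y v \<oplus> m \<otimes> m \<otimes> qf R v"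
proof (induct y v rule: V_induct2)
  case Nil then show ?case by simp
next
  case (Cons a b x y n)
  have c: "qf R x \<in> carrier R" "qf R y \<in> carrier R" "dotp R x y \<in> carrier R"
    using Cons qf_cl dot_cl V_cl by blast+
  show ?case using Cons(5)[OF Cons(6)] Cons(1,2,6) c by simp algebra
qed

lemma dot_shift: "y \<in> V n \<Longrightarrow> v \<in> V n \<Longrightarrow> w \<in> V n \<Longrightarrow> m \<in> carrier R \<Longrightarrow>
  dotp R (vadd R y (smul R m w)) v = dotp R y v \<oplus> m \<otimes> dotp R w v"
proof (induct n arbitrary: y v w)
  case 0 then show ?case using V_0 by simp
next
  case (Suc n)
  obtain a y' where y: "y = a # y'" "a \<in> carrier R" "y' \<in> V n" using Suc.prems(1) V_Suc_cases by blast
  obtain b v' where v: "v = b # v'" "b \<in> carrier R" "v' \<in> V n" using Suc.prems(2) V_Suc_cases by blast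
  obtain c w' where w: "w = c # w'" "c \<in> carrier R" "w' \<in> V n" using Suc.prems(3) V_Suc_cases by blast
  have c: "dotp R y' v' \<in> carrier R" "dotp R w' v' \<in> carrier R"
    using y v w dot_cl V_cl by blast+
  show ?case using Suc.hyps[OF y(3) v(3) w(3) Suc.prems(4)] Suc.prems(4) y v w c by simp algebra
qed

lemma dot_self: "v \<in> V n \<Longrightarrow> dotp R v v = qf R v"
  by (induct v rule: V_induct1) auto

lemma qf_smul: "y \<in> V n \<Longrightarrow> k \<in> carrier R \<Longrightarrow> qf R (smul R k y) = k \<otimes> k \<otimes> qf R y"
proof (induct y rule: V_induct1)
  case Nil then show ?case by simp
next
  case (Cons a x n)
  have c: "qf R x \<in> carrier R" using Cons qf_cl V_cl by blast
  show ?case using Cons c by simp algebra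
qed

lemma dot_smul: "y \<in> V n \<Longrightarrow> v \<in> V n \<Longrightarrow> k \<in> carrier R \<Longrightarrow> dotp R (smul R k y) v = k \<otimes> dotp R y v"
proof (induct y v rule: V_induct2)
  case Nil then show ?case by simp
next
  case (Cons a b x y n)
  have c: "dotp R x y \<in> carrier R" using Cons dot_cl V_cl by blast
  show ?case using Cons c by simp algebra
qed

lemma shift_inv: "y \<in> V n \<Longrightarrow> w \<in> V n \<Longrightarrow> m \<in> carrier R \<Longrightarrow>
  vadd R (vadd R y (smul R m w)) (smul R (\<ominus> m) w) = y"
proof (induct y w rule: V_induct2)
  case Nil then show ?case by simp
next
  case (Cons a b x y n)
  then show ?case by simp algebra
qed

lemma smul_inv: "y \<in> V n \<Longrightarrow> k \<in> carrier R \<Longrightarrow> k \<noteq> \<zero> \<Longrightarrow> smul R (inv k) (smul R k y) = y"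
proof (induct y rule: V_induct1)
  case Nil then show ?case by simp
next
  case (Cons a x n)
  have "inv k \<otimes> (k \<otimes> a) = (inv k \<otimes> k) \<otimes> a" using Cons inv_cl by algebra
  then show ?case using Cons linv by simp
qed

lemma vsub_vadd: "y \<in> V n \<Longrightarrow> c \<in> V n \<Longrightarrow> vsub R (vadd R y c) c = y"
  by (induct y c rule: V_induct2) (auto, algebra)

lemma vadd_vsub: "y \<in> V n \<Longrightarrow> c \<in> V n \<Longrightarrow> vadd R (vsub R y c) c = y"
  by (induct y c rule: V_induct2) (auto, algebra)

lemma vsub_vsub: "x \<in> V n \<Longrightarrow> c \<in> V n \<Longrightarrow> c' \<in> V n \<Longrightarrow>
  vsub R x c' = vsub R (vsub R x c) (vsub R c' c)"
proof (induct n arbitrary: x c c')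
  case 0 then show ?case using V_0 by simp
next
  case (Suc n)
  obtain a y' where y: "x = a # y'" "a \<in> carrier R" "y' \<in> V n" using Suc.prems(1) V_Suc_cases by blast
  obtain b v' where v: "c = b # v'" "b \<in> carrier R" "v' \<in> V n" using Suc.prems(2) V_Suc_cases by blast
  obtain e w' where w: "c' = e # w'" "e \<in> carrier R" "w' \<in> V n" using Suc.prems(3) V_Suc_cases by blast
  show ?case using Suc.hyps[OF y(3) v(3) w(3)] y v w by simp algebra
qed

lemma qf_vsub: "y \<in> V n \<Longrightarrow> v \<in> V n \<Longrightarrow>
  qf R (vsub R y v) = qf R y \<ominus> two \<otimes> dotp R y v \<oplus> qf R v"
proof (induct y v rule: V_induct2)
  case Nil then show ?case by simp algebra
next
  case (Cons a b x y n)
  have c: "qf R x \<in> carrier R" "qf R y \<in> carrier R" "dotp R x y \<in> carrier R"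
    using Cons qf_cl dot_cl V_cl by blast+
  show ?case using Cons(5) Cons(1,2) c by simp algebra
qed

lemma dot_zero: "v \<in> V n \<Longrightarrow> dotp R (replicate n \<zero>) v = \<zero>"
proof (induct n arbitrary: v)
  case 0 then show ?case by simp
next
  case (Suc n)
  then obtain b v' where "v = b # v'" "b \<in> carrier R" "v' \<in> V n" using V_Suc_cases by blast
  then show ?case using Suc by simp
qed

lemma zero_V: "replicate n \<zero> \<in> V n" unfolding fq_space_def by auto

lemma exists_dual: "v \<in> V n \<Longrightarrow> v \<noteq> replicate n \<zero> \<Longrightarrow> \<exists>w\<in>V n. dotp R w v = \<one>"
proof (induct n arbitrary: v)
  case 0 then show ?case using V_0 by simp
next
  case (Suc n)
  then obtain b v' where bv: "v = b # v'" "b \<in> carrier R" "v' \<in> V n" using V_Suc_cases by blast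
  show ?case
  proof (cases "b = \<zero>")
    case True
    then have "v' \<noteq> replicate n \<zero>" using Suc.prems bv by auto
    then obtain w where "w \<in> V n" "dotp R w v' = \<one>" using Suc.hyps bv by blast
    then show ?thesis using bv True V_Cons by (intro bexI[of _ "\<zero> # w"]) auto
  next
    case False
    have "dotp R (inv b # replicate n \<zero>) v = \<one>" using bv False dot_zero linv by simp
    then show ?thesis using bv False inv_cl zero_V V_Cons by blast
  qed
qed

lemma card_le_inj:
  assumes "\<And>y. y \<in> A \<Longrightarrow> f y \<in> B" "inj_on f A" "finite B"
  shows "card A \<le> card B"
proof -
  have "f ` A \<subseteq> B" using assms by auto
  then have "card (f ` A) \<le> card B" using assms(3) card_mono by blast
  then show ?thesis using card_image[OF assms(2)] by simp
qed

lemma shift_inj: "w \<in> V n \<Longrightarrow> m \<in> carrier R \<Longrightarrow> inj_on (\<lambda>y. vadd R y (smul R m w)) (V n)"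
  by (rule inj_onI) (metis shift_inv)

lemma smul_inj: "k \<in> carrier R \<Longrightarrow> k \<noteq> \<zero> \<Longrightarrow> inj_on (\<lambda>y. smul R k y) (V n)"
  by (rule inj_onI) (metis smul_inv)

lemma hyperplane:
  assumes v: "v \<in> V n" "v \<noteq> replicate n \<zero>" and t: "t \<in> carrier R"
  shows "q * card {y \<in> V n. dotp R y v = t} = q ^ n"
proof -
  obtain w where w: "w \<in> V n" "dotp R w v = \<one>" using exists_dual[OF v] by blast
  have le: "card {y \<in> V n. dotp R y v = s} \<le> card {y \<in> V n. dotp R y v = s'}"
    if s: "s \<in> carrier R" "s' \<in> carrier R" for s s'
  proof (rule card_le_inj[where f="\<lambda>y. vadd R y (smul R (s' \<ominus> s) w)"])
    fix y assume y: "y \<in> {y \<in> V n. dotp R y v = s}"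
    have "dotp R (vadd R y (smul R (s' \<ominus> s) w)) v = s \<oplus> (s' \<ominus> s) \<otimes> \<one>"
      using dot_shift[of y n v w "s' \<ominus> s"] y w v s by simp
    also have "\<dots> = s'" using s by algebra
    finally show "vadd R y (smul R (s' \<ominus> s) w) \<in> {y \<in> V n. dotp R y v = s'}"
      using y w s vadd_V smul_V by simp
  next
    show "inj_on (\<lambda>y. vadd R y (smul R (s' \<ominus> s) w)) {y \<in> V n. dotp R y v = s}"
      using shift_inj[of w n "s' \<ominus> s"] w s by (auto intro: inj_on_subset)
    show "finite {y \<in> V n. dotp R y v = s'}" using finV by simp
  qed
  have eq: "card {y \<in> V n. dotp R y v = s} = card {y \<in> V n. dotp R y v = t}" if "s \<in> carrier R" for s
    using le[OF that t] le[OF t that] by simp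
  have "q ^ n = (\<Sum>y\<in>V n. 1)" using cardV by simp
  also have "\<dots> = (\<Sum>s\<in>carrier R. \<Sum>y\<in>{y \<in> V n. dotp R y v = s}. 1)"
    by (rule sum.group[symmetric]) (use finF finV dot_cl V_cl v in auto)
  also have "\<dots> = (\<Sum>s\<in>carrier R. card {y \<in> V n. dotp R y v = t})" using eq by simp
  finally show ?thesis by simp
qed

end


context ffq begin

lemma sq_mult: "a \<in> Sq \<Longrightarrow> b \<in> Sq \<Longrightarrow> a \<otimes> b \<in> Sq"
proof -
  assume "a \<in> Sq" "b \<in> Sq"
  then obtain x y where xy: "x \<in> carrier R" "y \<in> carrier R" "a = x \<otimes> x" "b = y \<otimes> y" unfolding Sq_def by auto
  have "a \<otimes> b = (x \<otimes> y) \<otimes> (x \<otimes> y)" unfolding xy(3,4) using xy(1,2) by algebra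
  then show ?thesis using sq_in_Sq[of "x \<otimes> y"] xy by simp
qed

lemma sq_nonsq: assumes a: "a \<in> Sq" "a \<noteq> \<zero>" and b: "b \<in> carrier R - Sq" shows "a \<otimes> b \<in> carrier R - Sq"
proof -
  obtain x where x: "x \<in> carrier R" "a = x \<otimes> x" using a unfolding Sq_def by auto
  have x0: "x \<noteq> \<zero>" using x a by auto
  have ix: "inv x \<in> carrier R" using inv_cl x x0 by simp
  have bR: "b \<in> carrier R" using b by simp
  have "a \<otimes> b \<notin> Sq"
  proof
    assume "a \<otimes> b \<in> Sq"
    then obtain y where y: "y \<in> carrier R" "a \<otimes> b = y \<otimes> y" unfolding Sq_def by auto
    have "(y \<otimes> inv x) \<otimes> (y \<otimes> inv x) = (y \<otimes> y) \<otimes> (inv x \<otimes> inv x)" using y ix by algebra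
    also have "\<dots> = (x \<otimes> x \<otimes> b) \<otimes> (inv x \<otimes> inv x)" using y(2) x(2) by simp
    also have "\<dots> = b \<otimes> ((x \<otimes> inv x) \<otimes> (x \<otimes> inv x))" using x(1) ix bR by algebra
    also have "\<dots> = b" using rinv x(1) x0 bR by simp
    finally show False using sq_in_Sq[of "y \<otimes> inv x"] y ix b by simp
  qed
  then show ?thesis using a x bR by simp
qed

lemma inv_sq: assumes l: "l \<in> carrier R" "l \<noteq> \<zero>" shows "(inv l \<in> Sq) = (l \<in> Sq)"
proof
  assume "inv l \<in> Sq"
  then obtain y where y: "y \<in> carrier R" "inv l = y \<otimes> y" unfolding Sq_def by auto
  have il: "inv l \<in> carrier R" "l \<otimes> inv l = \<one>" using inv_cl rinv l by auto
  have y0: "y \<noteq> \<zero>" using y inv_nz[OF l] by auto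
  have iy: "inv y \<in> carrier R" "y \<otimes> inv y = \<one>" using inv_cl rinv y(1) y0 by auto
  have "l = l \<otimes> ((y \<otimes> inv y) \<otimes> (y \<otimes> inv y))" using iy l by simp
  also have "\<dots> = (l \<otimes> (y \<otimes> y)) \<otimes> (inv y \<otimes> inv y)" using iy(1) y(1) l(1) by algebra
  also have "\<dots> = inv y \<otimes> inv y" using il y(2)[symmetric] iy by simp
  finally show "l \<in> Sq" using sq_in_Sq[OF iy(1)] by simp
next
  assume "l \<in> Sq"
  then obtain y where y: "y \<in> carrier R" "l = y \<otimes> y" unfolding Sq_def by auto
  have il: "inv l \<in> carrier R" "inv l \<otimes> l = \<one>" using inv_cl linv l by auto
  have y0: "y \<noteq> \<zero>" using y l by auto
  have iy: "inv y \<in> carrier R" "y \<otimes> inv y = \<one>" using inv_cl rinv y(1) y0 by auto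
  have "inv l = inv l \<otimes> ((y \<otimes> inv y) \<otimes> (y \<otimes> inv y))" using iy il by simp
  also have "\<dots> = (inv l \<otimes> (y \<otimes> y)) \<otimes> (inv y \<otimes> inv y)" using iy(1) y(1) il(1) by algebra
  also have "\<dots> = inv y \<otimes> inv y" using il y(2)[symmetric] iy by simp
  finally show "inv l \<in> Sq" using sq_in_Sq[OF iy(1)] by simp
qed


definition "Kc n v r t = card {y \<in> V n. qf R y = r \<and> dotp R y v = t}"

lemma K_shift_le:
  assumes v: "v \<in> V n" and rt: "r \<in> carrier R" "t \<in> carrier R" and m: "m \<in> carrier R"
  shows "Kc n v r t \<le> Kc n v (r \<oplus> two \<otimes> m \<otimes> t \<oplus> m \<otimes> m \<otimes> qf R v) (t \<oplus> m \<otimes> qf R v)"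
  unfolding Kc_def
proof (rule card_le_inj[where f="\<lambda>y. vadd R y (smul R m v)"])
  fix y assume y: "y \<in> {y \<in> V n. qf R y = r \<and> dotp R y v = t}"
  show "vadd R y (smul R m v) \<in> {y \<in> V n. qf R y = r \<oplus> two \<otimes> m \<otimes> t \<oplus> m \<otimes> m \<otimes> qf R v \<and> dotp R y v = t \<oplus> m \<otimes> qf R v}"
    using y qf_shift[of y n v m] dot_shift[of y n v v m] dot_self[OF v] v m vadd_V smul_V by auto
next
  show "inj_on (\<lambda>y. vadd R y (smul R m v)) {y \<in> V n. qf R y = r \<and> dotp R y v = t}"
    using shift_inj[OF v m] by (auto intro: inj_on_subset)
  show "finite {y \<in> V n. qf R y = r \<oplus> two \<otimes> m \<otimes> t \<oplus> m \<otimes> m \<otimes> qf R v \<and> dotp R y v = t \<oplus> m \<otimes> qf R v}"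
    using finV by simp
qed

lemma K_shift:
  assumes v: "v \<in> V n" and rt: "r \<in> carrier R" "t \<in> carrier R" and m: "m \<in> carrier R"
  shows "Kc n v r t = Kc n v (r \<oplus> two \<otimes> m \<otimes> t \<oplus> m \<otimes> m \<otimes> qf R v) (t \<oplus> m \<otimes> qf R v)"
proof -
  have l: "qf R v \<in> carrier R" using qf_cl V_cl v by blast
  let ?r = "r \<oplus> two \<otimes> m \<otimes> t \<oplus> m \<otimes> m \<otimes> qf R v" and ?t = "t \<oplus> m \<otimes> qf R v"
  have "Kc n v ?r ?t \<le> Kc n v (?r \<oplus> two \<otimes> (\<ominus> m) \<otimes> ?t \<oplus> (\<ominus> m) \<otimes> (\<ominus> m) \<otimes> qf R v) (?t \<oplus> (\<ominus> m) \<otimes> qf R v)"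
    by (rule K_shift_le) (use v rt m l in auto)
  also have "?r \<oplus> two \<otimes> (\<ominus> m) \<otimes> ?t \<oplus> (\<ominus> m) \<otimes> (\<ominus> m) \<otimes> qf R v = r" using rt m l by algebra
  also have "?t \<oplus> (\<ominus> m) \<otimes> qf R v = t" using rt m l by algebra
  finally show ?thesis using K_shift_le[OF v rt m] by simp
qed

lemma K_scale_le:
  assumes v: "v \<in> V n" and r: "r \<in> carrier R" and k: "k \<in> carrier R" "k \<noteq> \<zero>"
  shows "Kc n v r \<zero> \<le> Kc n v (k \<otimes> k \<otimes> r) \<zero>"
  unfolding Kc_def
proof (rule card_le_inj[where f="\<lambda>y. smul R k y"])
  fix y assume y: "y \<in> {y \<in> V n. qf R y = r \<and> dotp R y v = \<zero>}"
  show "smul R k y \<in> {y \<in> V n. qf R y = k \<otimes> k \<otimes> r \<and> dotp R y v = \<zero>}"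
    using y qf_smul[of y n k] dot_smul[of y n v k] v k smul_V by auto
next
  show "inj_on (\<lambda>y. smul R k y) {y \<in> V n. qf R y = r \<and> dotp R y v = \<zero>}"
    using smul_inj[OF k] by (auto intro: inj_on_subset)
  show "finite {y \<in> V n. qf R y = k \<otimes> k \<otimes> r \<and> dotp R y v = \<zero>}" using finV by simp
qed

lemma K_scale:
  assumes v: "v \<in> V n" and r: "r \<in> carrier R" and k: "k \<in> carrier R" "k \<noteq> \<zero>"
  shows "Kc n v r \<zero> = Kc n v (k \<otimes> k \<otimes> r) \<zero>"
proof -
  have ik: "inv k \<in> carrier R" "inv k \<noteq> \<zero>" "inv k \<otimes> k = \<one>" using inv_cl inv_nz linv k by auto
  have "Kc n v (k \<otimes> k \<otimes> r) \<zero> \<le> Kc n v (inv k \<otimes> inv k \<otimes> (k \<otimes> k \<otimes> r)) \<zero>"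
    by (rule K_scale_le) (use v r k ik in auto)
  also have "inv k \<otimes> inv k \<otimes> (k \<otimes> k \<otimes> r) = (inv k \<otimes> k) \<otimes> (inv k \<otimes> k) \<otimes> r"
    using ik(1) k(1) r by algebra
  also have "\<dots> = r" using ik r by simp
  finally show ?thesis using K_scale_le[OF v r k] by simp
qed

lemma K_sum_r: "v \<in> V n \<Longrightarrow> t \<in> carrier R \<Longrightarrow> (\<Sum>r\<in>carrier R. Kc n v r t) = card {y \<in> V n. dotp R y v = t}"
proof -
  assume v: "v \<in> V n" "t \<in> carrier R"
  have se: "\<And>x. {y \<in> {y \<in> V n. dotp R y v = t}. qf R y = x} = {y \<in> V n. qf R y = x \<and> dotp R y v = t}" by auto
  have "(\<Sum>r\<in>carrier R. Kc n v r t) = (\<Sum>r\<in>carrier R. \<Sum>y\<in>{y \<in> {y \<in> V n. dotp R y v = t}. qf R y = r}. 1)"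
    unfolding Kc_def se by simp
  also have "\<dots> = (\<Sum>y\<in>{y \<in> V n. dotp R y v = t}. 1)"
    by (rule sum.group) (use finF finV qf_cl V_cl in auto)
  finally show ?thesis by simp
qed

lemma K_sum_t: "v \<in> V n \<Longrightarrow> r \<in> carrier R \<Longrightarrow> (\<Sum>t\<in>carrier R. Kc n v r t) = Nc n r"
proof -
  assume v: "v \<in> V n" "r \<in> carrier R"
  have se: "\<And>x. {y \<in> {y \<in> V n. qf R y = r}. dotp R y v = x} = {y \<in> V n. qf R y = r \<and> dotp R y v = x}" by auto
  have "(\<Sum>t\<in>carrier R. Kc n v r t) = (\<Sum>t\<in>carrier R. \<Sum>y\<in>{y \<in> {y \<in> V n. qf R y = r}. dotp R y v = t}. 1)"
    unfolding Kc_def se by simp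
  also have "\<dots> = (\<Sum>y\<in>{y \<in> V n. qf R y = r}. 1)"
    by (rule sum.group) (use finF finV dot_cl V_cl v in auto)
  finally show ?thesis unfolding Nc_def by simp
qed

lemma q_ge3: "q \<ge> 3" using q3 by (metis mod_less_eq_dividend)

lemma iso_t_nz:
  assumes v: "v \<in> V n" "v \<noteq> replicate n \<zero>" "qf R v = \<zero>" and r: "r \<in> carrier R"
    and t: "t \<in> carrier R" "t \<noteq> \<zero>"
  shows "q * q * Kc n v r t = q ^ n"
proof -
  have t2: "two \<otimes> t \<in> carrier R" "two \<otimes> t \<noteq> \<zero>" using t two_nz integral_iff by auto
  have i2: "inv (two \<otimes> t) \<in> carrier R" "inv (two \<otimes> t) \<otimes> (two \<otimes> t) = \<one>" using inv_cl linv t2 by auto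
  have eq: "Kc n v r' t = Kc n v r t" if r': "r' \<in> carrier R" for r'
  proof -
    let ?m = "(r' \<ominus> r) \<otimes> inv (two \<otimes> t)"
    have m: "?m \<in> carrier R" using r r' i2 by simp
    have "Kc n v r t = Kc n v (r \<oplus> two \<otimes> ?m \<otimes> t \<oplus> ?m \<otimes> ?m \<otimes> qf R v) (t \<oplus> ?m \<otimes> qf R v)"
      by (rule K_shift[OF v(1) r t(1) m])
    also have "t \<oplus> ?m \<otimes> qf R v = t" using v(3) m t by simp
    also have z: "?m \<otimes> ?m \<otimes> qf R v = \<zero>" using v(3) m by simp
    have "r \<oplus> two \<otimes> ?m \<otimes> t \<oplus> ?m \<otimes> ?m \<otimes> qf R v = r \<oplus> two \<otimes> ?m \<otimes> t \<oplus> \<zero>" by (simp only: z)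
    also have "\<dots> = r \<oplus> (r' \<ominus> r) \<otimes> (inv (two \<otimes> t) \<otimes> (two \<otimes> t))"
      using r r' t i2(1) by algebra
    also have "\<dots> = r \<oplus> (r' \<ominus> r) \<otimes> \<one>" by (simp only: i2(2))
    also have "\<dots> = r'" using r r' by algebra
    finally show ?thesis by simp
  qed
  have "q * card {y \<in> V n. dotp R y v = t} = q ^ n" by (rule hyperplane[OF v(1,2) t(1)])
  moreover have "card {y \<in> V n. dotp R y v = t} = (\<Sum>r'\<in>carrier R. Kc n v r' t)"
    using K_sum_r[OF v(1) t(1)] by simp
  moreover have "\<dots> = q * Kc n v r t" using eq by simp
  ultimately show ?thesis by (simp add: mult.assoc)
qed

lemma iso_t_0:
  assumes v: "v \<in> V n" "v \<noteq> replicate n \<zero>" "qf R v = \<zero>" and r: "r \<in> carrier R"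
  shows "q * q * int (Kc n v r \<zero>) = q * q * int (Nc n r) - (q - 1) * q ^ n"
proof -
  have "Nc n r = Kc n v r \<zero> + (\<Sum>t\<in>carrier R - {\<zero>}. Kc n v r t)"
    using K_sum_t[OF v(1) r] sum.remove[OF finF zero_closed, of "Kc n v r"] by simp
  then have "q * q * Nc n r = q * q * Kc n v r \<zero> + (\<Sum>t\<in>carrier R - {\<zero>}. q * q * Kc n v r t)"
    by (simp add: algebra_simps sum_distrib_left)
  also have "(\<Sum>t\<in>carrier R - {\<zero>}. q * q * Kc n v r t) = (\<Sum>t\<in>carrier R - {\<zero>}. q ^ n)"
    using iso_t_nz[OF v r] by (intro sum.cong refl) auto
  also have "\<dots> = (q - 1) * q ^ n" using finF by simp
  finally have "int (q * q * Nc n r) = int (q * q * Kc n v r \<zero> + (q - 1) * q ^ n)" by simp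
  then show ?thesis using q_ge3 by (simp add: of_nat_diff)
qed

end


context ffq begin

lemma qf_zero_vec: "qf R (replicate n \<zero>) = \<zero>" by (induct n) auto

lemma aniso_reduce:
  assumes v: "v \<in> V n" and l: "qf R v \<noteq> \<zero>" and rt: "r \<in> carrier R" "t \<in> carrier R"
  shows "Kc n v r t = Kc n v (r \<ominus> t \<otimes> t \<otimes> inv (qf R v)) \<zero>"
proof -
  let ?l = "qf R v" let ?i = "inv (qf R v)"
  have lc: "?l \<in> carrier R" using qf_cl V_cl v by blast
  have i: "?i \<in> carrier R" "?i \<otimes> ?l = \<one>" using inv_cl linv lc l by auto
  let ?m = "\<ominus> t \<otimes> ?i"
  have m: "?m \<in> carrier R" using rt i by simp
  have "Kc n v r t = Kc n v (r \<oplus> two \<otimes> ?m \<otimes> t \<oplus> ?m \<otimes> ?m \<otimes> ?l) (t \<oplus> ?m \<otimes> ?l)"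
    by (rule K_shift[OF v rt m])
  also have "t \<oplus> ?m \<otimes> ?l = t \<ominus> t \<otimes> (?i \<otimes> ?l)" using rt i(1) lc by algebra
  also have "\<dots> = t \<ominus> t \<otimes> \<one>" by (simp only: i(2))
  also have "\<dots> = \<zero>" using rt by algebra
  also have "r \<oplus> two \<otimes> ?m \<otimes> t \<oplus> ?m \<otimes> ?m \<otimes> ?l = r \<ominus> two \<otimes> t \<otimes> t \<otimes> ?i \<oplus> t \<otimes> t \<otimes> ?i \<otimes> (?i \<otimes> ?l)"
    using rt i(1) lc by algebra
  also have "\<dots> = r \<ominus> two \<otimes> t \<otimes> t \<otimes> ?i \<oplus> t \<otimes> t \<otimes> ?i \<otimes> \<one>" by (simp only: i(2))
  also have "\<dots> = r \<ominus> t \<otimes> t \<otimes> ?i" using rt i(1) by algebra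
  finally show ?thesis .
qed

lemma kk_sq: assumes v: "v \<in> V n" and x: "x \<in> carrier R" "x \<noteq> \<zero>"
  shows "Kc n v (x \<otimes> x) \<zero> = Kc n v \<one> \<zero>"
  using K_scale[OF v one_closed x] x by simp

lemma kk_nonsq: assumes v: "v \<in> V n" and b: "b \<in> carrier R - Sq"
  shows "Kc n v b \<zero> = Kc n v (\<ominus> \<one>) \<zero>"
proof -
  let ?g = "\<ominus> \<one>"
  have g: "?g \<in> carrier R - Sq" using minus_one_nonsq by simp
  have g0: "?g \<noteq> \<zero>" using g zero_Sq by auto
  have b0: "b \<noteq> \<zero>" using b zero_Sq by auto
  have bR: "b \<in> carrier R" using b by simp
  have gR: "?g \<in> carrier R" by simp
  have ig: "inv ?g \<in> carrier R" "?g \<otimes> inv ?g = \<one>" using inv_cl[OF gR g0] rinv[OF gR g0] by auto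
  obtain x where x: "x \<in> carrier R" "?g \<otimes> b = x \<otimes> x" using nonsq_mult[OF g b] unfolding Sq_def by auto
  have x0: "x \<noteq> \<zero>" using x g0 b0 b integral_iff by auto
  let ?k = "x \<otimes> inv ?g"
  have k: "?k \<in> carrier R" "?k \<noteq> \<zero>" using x x0 ig integral_iff inv_nz g g0 by auto
  have "?k \<otimes> ?k \<otimes> ?g = (x \<otimes> x) \<otimes> inv ?g \<otimes> (?g \<otimes> inv ?g)" using x(1) ig(1) by algebra
  also have "\<dots> = (?g \<otimes> b) \<otimes> inv ?g \<otimes> \<one>" by (simp only: ig(2) x(2))
  also have "\<dots> = b \<otimes> (?g \<otimes> inv ?g)" using bR ig(1) by algebra
  also have "\<dots> = b" using ig bR by simp
  finally have kb: "?k \<otimes> ?k \<otimes> ?g = b" .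
  show ?thesis using K_scale[OF v _ k, of ?g] kb by simp
qed

lemma kk_class: assumes v: "v \<in> V n" and a: "a \<in> carrier R"
  shows "Kc n v a \<zero> = (if a = \<zero> then Kc n v \<zero> \<zero> else if a \<in> Sq then Kc n v \<one> \<zero> else Kc n v (\<ominus> \<one>) \<zero>)"
proof -
  have "Kc n v a \<zero> = Kc n v \<one> \<zero>" if h: "a \<in> Sq" "a \<noteq> \<zero>"
  proof -
    from h(1) obtain x where x: "x \<in> carrier R" "a = x \<otimes> x" unfolding Sq_def by blast
    moreover have "x \<noteq> \<zero>" using x h(2) by auto
    ultimately show ?thesis using kk_sq[OF v x(1)] by simp
  qed
  then show ?thesis using kk_nonsq[OF v] a by auto
qed

lemma sum_classes: assumes "\<And>a. a \<in> carrier R \<Longrightarrow> f a = (if a = \<zero> then c0 else if a \<in> Sq then c1 else c2)"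
  shows "(\<Sum>a\<in>carrier R. f a) = c0 + card Sq0 * c1 + card Sq0 * (c2 :: nat)"
proof -
  have fS: "finite Sq0" "finite (carrier R - Sq)" using finF Sq_sub unfolding Sq0_def by (auto intro: finite_subset)
  have e: "carrier R = insert \<zero> (Sq0 \<union> (carrier R - Sq))" using Sq_sub zero_Sq unfolding Sq0_def by auto
  have "(\<Sum>a\<in>carrier R. f a) = f \<zero> + (\<Sum>a\<in>Sq0 \<union> (carrier R - Sq). f a)"
    by (subst e, rule sum.insert) (use fS zero_Sq in \<open>auto simp: Sq0_def\<close>)
  also have "(\<Sum>a\<in>Sq0 \<union> (carrier R - Sq). f a) = (\<Sum>a\<in>Sq0. f a) + (\<Sum>a\<in>carrier R - Sq. f a)"
    by (rule sum.union_disjoint) (use fS in \<open>auto simp: Sq0_def\<close>)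
  also have "(\<Sum>a\<in>Sq0. f a) = (\<Sum>a\<in>Sq0. c1)" using assms Sq_sub by (intro sum.cong refl) (auto simp: Sq0_def)
  also have "(\<Sum>a\<in>carrier R - Sq. f a) = (\<Sum>a\<in>carrier R - Sq. c2)" using assms zero_Sq by (intro sum.cong refl) auto
  finally show ?thesis using assms card_nonsq by simp
qed

end


context ffq begin

lemma div_l: assumes l: "l \<in> carrier R" "l \<noteq> \<zero>" and x: "x \<in> carrier R" "y \<in> carrier R"
  shows "(x \<otimes> inv l = y) = (x = y \<otimes> l)"
proof
  have i: "inv l \<in> carrier R" "inv l \<otimes> l = \<one>" using inv_cl linv l by auto
  assume h: "x \<otimes> inv l = y"
  have "x = x \<otimes> (inv l \<otimes> l)" using i x by simp
  also have "\<dots> = (x \<otimes> inv l) \<otimes> l" using i(1) x l by algebra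
  finally show "x = y \<otimes> l" using h by simp
next
  have i: "inv l \<in> carrier R" "l \<otimes> inv l = \<one>" using inv_cl rinv l by auto
  assume h: "x = y \<otimes> l"
  have "x \<otimes> inv l = y \<otimes> (l \<otimes> inv l)" unfolding h using i(1) x l by algebra
  then show "x \<otimes> inv l = y" using i x by simp
qed

lemma tt_class:
  assumes t: "t \<in> carrier R" "t \<noteq> \<zero>" and c: "c \<in> carrier R"
  shows "c \<in> Sq \<Longrightarrow> c \<noteq> \<zero> \<Longrightarrow> t \<otimes> t \<otimes> c \<in> Sq \<and> t \<otimes> t \<otimes> c \<noteq> \<zero>"
    and "c \<notin> Sq \<Longrightarrow> t \<otimes> t \<otimes> c \<notin> Sq"
proof -
  have tt: "t \<otimes> t \<in> Sq" "t \<otimes> t \<noteq> \<zero>" using sq_in_Sq t integral_iff by auto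
  show "c \<in> Sq \<Longrightarrow> c \<noteq> \<zero> \<Longrightarrow> t \<otimes> t \<otimes> c \<in> Sq \<and> t \<otimes> t \<otimes> c \<noteq> \<zero>"
    using sq_mult[OF tt(1)] tt(2) c t integral_iff by auto
  show "c \<notin> Sq \<Longrightarrow> t \<otimes> t \<otimes> c \<notin> Sq" using sq_nonsq[OF tt] c by auto
qed

lemma aniso_bound:
  assumes n: "n mod 4 = 3" and v: "v \<in> V n" and l0: "qf R v \<noteq> \<zero>"
    and a: "a \<in> carrier R" and cond: "a \<noteq> \<zero> \<or> qf R v \<in> Sq"
  shows "int q * int (Kc n v a \<zero>) \<le> int q ^ (n - 1) + int q ^ ((n - 1) div 2)"
proof -
  define l where "l = qf R v"
  have lc: "l \<in> carrier R" unfolding l_def using qf_cl V_cl v by blast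
  have l0': "l \<noteq> \<zero>" using l0 l_def by simp
  have il: "inv l \<in> carrier R" "inv l \<noteq> \<zero>" using inv_cl inv_nz lc l0' by auto
  define m where "m = (n - 1) div 2"
  have nm: "n = 2 * m + 1" unfolding m_def using n by presburger
  have m1: "m \<ge> 1" using n nm by presburger
  define K0 where "K0 = int (Kc n v \<zero> \<zero>)"
  define K1 where "K1 = int (Kc n v \<one> \<zero>)"
  define K2 where "K2 = int (Kc n v (\<ominus> \<one>) \<zero>)"
  define h where "h = int (card Sq0)"
  have h2: "2 * h = int q - 1" unfolding h_def using card_Sq0 q_ge3 by (simp add: of_nat_diff)
  have hpos: "h > 0" using h2 q_ge3 by simp
  have cls: "int (Kc n v b \<zero>) = (if b = \<zero> then K0 else if b \<in> Sq then K1 else K2)" if "b \<in> carrier R" for b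
    using kk_class[OF v that] unfolding K0_def K1_def K2_def by simp
  have vnz: "v \<noteq> replicate n \<zero>" using l0 qf_zero_vec by auto
  have "q * (\<Sum>b\<in>carrier R. Kc n v b \<zero>) = q ^ n"
    using hyperplane[OF v vnz zero_closed] K_sum_r[OF v zero_closed] by simp
  moreover have "(\<Sum>b\<in>carrier R. Kc n v b \<zero>) = Kc n v \<zero> \<zero> + card Sq0 * Kc n v \<one> \<zero> + card Sq0 * Kc n v (\<ominus> \<one>) \<zero>"
    by (rule sum_classes) (use kk_class[OF v] in simp)
  ultimately have "int q * (K0 + h * K1 + h * K2) = int q * int q ^ (2 * m)"
    unfolding K0_def K1_def K2_def h_def using nm by (simp flip: of_nat_mult of_nat_add of_nat_power)
  then have E0: "K0 + h * K1 + h * K2 = int q ^ (2 * m)" using q_ge3 by simp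
  have sumt: "int (Nc n r) = (\<Sum>t\<in>carrier R. int (Kc n v (r \<ominus> t \<otimes> t \<otimes> inv l) \<zero>))" if r: "r \<in> carrier R" for r
  proof -
    have "Nc n r = (\<Sum>t\<in>carrier R. Kc n v r t)" using K_sum_t[OF v r] by simp
    also have "\<dots> = (\<Sum>t\<in>carrier R. Kc n v (r \<ominus> t \<otimes> t \<otimes> inv l) \<zero>)"
      using aniso_reduce[OF v l0 r] unfolding l_def by (intro sum.cong refl) simp
    finally show ?thesis by simp
  qed
  have N0: "int (Nc n \<zero>) = int q ^ (2 * m)" using sphere_count_0[OF n] nm by simp
  have split0: "(\<Sum>t\<in>carrier R. f t) = f \<zero> + (\<Sum>t\<in>carrier R - {\<zero>}. f t)" for f :: "'a \<Rightarrow> int"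
    using sum.remove[OF finF zero_closed] by simp
  have mil: "\<zero> \<ominus> t \<otimes> t \<otimes> inv l = t \<otimes> t \<otimes> (\<ominus> (inv l))" if "t \<in> carrier R" for t
    using that il(1) by algebra
  have K12: "K1 = K2"
  proof (cases "l \<in> Sq")
    case True
    have mi: "\<ominus> (inv l) \<notin> Sq"
    proof
      assume "\<ominus> (inv l) \<in> Sq"
      moreover have "inv l \<in> Sq" using inv_sq lc l0' True by simp
      ultimately have "(\<ominus> (inv l)) \<otimes> l \<in> Sq" using sq_mult True by simp
      moreover have "(\<ominus> (inv l)) \<otimes> l = \<ominus> \<one>" using il lc l0' linv by (simp add: l_minus)
      ultimately show False using minus_one_nonsq by simp
    qed
    have "int (Nc n \<zero>) = K0 + (\<Sum>t\<in>carrier R - {\<zero>}. K2)"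
      unfolding sumt[OF zero_closed] split0
    proof (intro arg_cong2[where f="(+)"] sum.cong refl)
      show "int (Kc n v (\<zero> \<ominus> \<zero> \<otimes> \<zero> \<otimes> inv l) \<zero>) = K0" unfolding K0_def using il by (simp add: a_minus_def)
      fix t assume t: "t \<in> carrier R - {\<zero>}"
      have "t \<otimes> t \<otimes> (\<ominus> (inv l)) \<notin> Sq" using tt_class(2)[of t "\<ominus> (inv l)"] t il mi by simp
      moreover have "t \<otimes> t \<otimes> (\<ominus> (inv l)) \<in> carrier R" using t il by simp
      ultimately show "int (Kc n v (\<zero> \<ominus> t \<otimes> t \<otimes> inv l) \<zero>) = K2"
        using cls[of "t \<otimes> t \<otimes> (\<ominus> (inv l))"] mil[of t] t zero_Sq by auto
    qed
    then have e: "K0 + 2 * h * K2 = int q ^ (2 * m)" using N0 h2 finF q_ge3 by (simp add: of_nat_diff)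
    have "2 * h * K2 = h * K2 + h * K2" by (simp add: algebra_simps)
    then have "h * K1 = h * K2" using e E0 by linarith
    then show ?thesis using hpos by simp
  next
    case False
    have mi: "\<ominus> (inv l) \<in> Sq" "\<ominus> (inv l) \<noteq> \<zero>"
    proof -
      have "inv l \<in> carrier R - Sq" using inv_sq lc l0' False il by simp
      then have "(\<ominus> \<one>) \<otimes> inv l \<in> Sq" using nonsq_mult minus_one_nonsq by simp
      then show "\<ominus> (inv l) \<in> Sq" using il by (simp add: l_minus)
      show "\<ominus> (inv l) \<noteq> \<zero>" using il by (metis add.inv_eq_1_iff)
    qed
    have "int (Nc n \<zero>) = K0 + (\<Sum>t\<in>carrier R - {\<zero>}. K1)"
      unfolding sumt[OF zero_closed] split0
    proof (intro arg_cong2[where f="(+)"] sum.cong refl)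
      show "int (Kc n v (\<zero> \<ominus> \<zero> \<otimes> \<zero> \<otimes> inv l) \<zero>) = K0" unfolding K0_def using il by (simp add: a_minus_def)
      fix t assume t: "t \<in> carrier R - {\<zero>}"
      have "t \<otimes> t \<otimes> (\<ominus> (inv l)) \<in> Sq \<and> t \<otimes> t \<otimes> (\<ominus> (inv l)) \<noteq> \<zero>" using tt_class(1)[of t "\<ominus> (inv l)"] t il mi by simp
      moreover have "t \<otimes> t \<otimes> (\<ominus> (inv l)) \<in> carrier R" using t il by simp
      ultimately show "int (Kc n v (\<zero> \<ominus> t \<otimes> t \<otimes> inv l) \<zero>) = K1"
        using cls[of "t \<otimes> t \<otimes> (\<ominus> (inv l))"] mil[of t] t by auto
    qed
    then have e: "K0 + 2 * h * K1 = int q ^ (2 * m)" using N0 h2 finF q_ge3 by (simp add: of_nat_diff)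
    have "2 * h * K1 = h * K1 + h * K1" by (simp add: algebra_simps)
    then have "h * K1 = h * K2" using e E0 by linarith
    then show ?thesis using hpos by simp
  qed
  have r_ne: "r \<ominus> t \<otimes> t \<otimes> inv l = \<zero> \<longleftrightarrow> t \<otimes> t = r \<otimes> l" if "r \<in> carrier R" "t \<in> carrier R" for r t
  proof -
    have "r \<ominus> t \<otimes> t \<otimes> inv l = \<zero> \<longleftrightarrow> t \<otimes> t \<otimes> inv l = r"
      using that il by (metis m_closed r_right_minus_eq)
    also have "\<dots> \<longleftrightarrow> t \<otimes> t = r \<otimes> l" using div_l[OF lc l0'] that by simp
    finally show ?thesis .
  qed
  have clsK: "int (Kc n v b \<zero>) = K1" if "b \<in> carrier R" "b \<noteq> \<zero>" for b
    using cls[OF that(1)] that(2) K12 by simp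
  define Q where "Q = int q ^ (2 * m)"
  define M where "M = int q ^ m"
  have Mnn: "M \<ge> 0" unfolding M_def by simp
  have exps: "int q ^ (n - 1) = Q" "int q ^ ((n - 1) div 2) = M" unfolding Q_def M_def using nm by simp_all
  show ?thesis
  proof (cases "l \<in> Sq")
    case False
    have "int (Nc n \<one>) = (\<Sum>t\<in>carrier R. K1)"
      unfolding sumt[OF one_closed]
    proof (intro sum.cong refl)
      fix t assume t: "t \<in> carrier R"
      have "\<one> \<ominus> t \<otimes> t \<otimes> inv l \<noteq> \<zero>"
      proof
        assume "\<one> \<ominus> t \<otimes> t \<otimes> inv l = \<zero>"
        then have "t \<otimes> t = l" using r_ne[OF one_closed t] lc by simp
        then show False using False sq_in_Sq[OF t] by simp
      qed
      then show "int (Kc n v (\<one> \<ominus> t \<otimes> t \<otimes> inv l) \<zero>) = K1" using clsK t il by simp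
    qed
    also have "\<dots> = int q * K1" by simp
    finally have "int q * K1 = Q - M" using sphere_count_sq[OF n one_closed] exps by simp
    moreover have "a \<noteq> \<zero>" using cond False l_def by simp
    ultimately show ?thesis using clsK[OF a] exps Mnn by simp
  next
    case True
    have lnm: "l \<noteq> \<ominus> l"
    proof
      assume hh: "l = \<ominus> l"
      have "l \<oplus> l = l \<oplus> \<ominus> l" using arg_cong[OF hh, of "\<lambda>y. l \<oplus> y"] .
      also have "l \<oplus> \<ominus> l = \<zero>" using lc by (rule r_neg)
      finally show False using double_zero[OF lc] l0' by blast
    qed
    let ?T = "{l, \<ominus> l}"
    have "int (Nc n l) = (\<Sum>t\<in>carrier R. if t \<in> ?T then K0 else K1)"
      unfolding sumt[OF lc]
    proof (intro sum.cong refl)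
      fix t assume t: "t \<in> carrier R"
      have iff: "l \<ominus> t \<otimes> t \<otimes> inv l = \<zero> \<longleftrightarrow> t \<in> ?T"
        using r_ne[OF lc t] sq_eq[OF lc t] by simp
      show "int (Kc n v (l \<ominus> t \<otimes> t \<otimes> inv l) \<zero>) = (if t \<in> ?T then K0 else K1)"
      proof (cases "t \<in> ?T")
        case True
        then have "l \<ominus> t \<otimes> t \<otimes> inv l = \<zero>" using iff by blast
        then show ?thesis using True unfolding K0_def by simp
      next
        case False
        then have "l \<ominus> t \<otimes> t \<otimes> inv l \<noteq> \<zero>" using iff by blast
        moreover have "l \<ominus> t \<otimes> t \<otimes> inv l \<in> carrier R" using t il lc by simp
        ultimately show ?thesis using clsK False by simp
      qed
    qed
    also have "\<dots> = (\<Sum>t\<in>carrier R \<inter> ?T. K0) + (\<Sum>t\<in>carrier R - ?T. K1)"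
    proof -
      have e: "{t. t \<in> ?T} = ?T" by blast
      show ?thesis using sum.If_cases[OF finF, of "\<lambda>t. t \<in> ?T" "\<lambda>_. K0" "\<lambda>_. K1"] unfolding e Diff_eq .
    qed
    also have "carrier R \<inter> ?T = ?T" using lc by auto
    also have "card (carrier R - ?T) = q - 2" using lc lnm finF by (simp add: card_Diff_subset)
    then have "(\<Sum>t\<in>carrier R - ?T. K1) = int (q - 2) * K1" by simp
    finally have e2: "int (Nc n l) = 2 * K0 + (int q - 2) * K1" using lnm q_ge3 by (simp add: of_nat_diff)
    obtain ll where ll: "ll \<in> carrier R" "l = ll \<otimes> ll" using True unfolding Sq_def by auto
    have "ll \<noteq> \<zero>" using ll l0' by auto
    then have "int (Nc n l) = Q - M" using sphere_count_sq[OF n ll(1)] ll(2) exps by simp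
    with e2 have eq2: "2 * K0 + (int q - 2) * K1 = Q - M" by simp
    have "(int q - 1) * K1 = h * K1 + h * K2" unfolding h2[symmetric] K12 by (simp add: algebra_simps)
    then have eq1: "K0 + (int q - 1) * K1 = Q" using E0 unfolding Q_def by linarith
    have "int q * K1 = 2 * (K0 + (int q - 1) * K1) - (2 * K0 + (int q - 2) * K1)" by (simp add: algebra_simps)
    then have qK1: "int q * K1 = Q + M" using eq1 eq2 by simp
    have K0e: "K0 = Q - (int q - 1) * K1" using eq1 by simp
    have "int q * K0 = int q * Q - (int q - 1) * (int q * K1)" unfolding K0e by (simp add: algebra_simps)
    also have "\<dots> = Q + M - int q * M" unfolding qK1 by (simp add: algebra_simps)
    finally have qK0: "int q * K0 \<le> Q + M" using Mnn by simp
    show ?thesis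
    proof (cases "a = \<zero>")
      case True then show ?thesis using qK0 exps unfolding K0_def by simp
    next
      case False then show ?thesis using clsK[OF a] qK1 exps by simp
    qed
  qed
qed

end


context ffq begin

lemma vadd_zero: "c \<in> V n \<Longrightarrow> vadd R (replicate n \<zero>) c = c"
proof (induct n arbitrary: c)
  case 0 then show ?case using V_0 by simp
next
  case (Suc n)
  then obtain b c' where "c = b # c'" "b \<in> carrier R" "c' \<in> V n" using V_Suc_cases by blast
  then show ?case using Suc by simp
qed

lemma sphere_card: assumes c: "c \<in> V d" shows "card (fq_sphere R d (c, r)) = Nc d r"
proof -
  have fin1: "finite (fq_sphere R d (c, r))" using finV[of d] sphere_iff[OF c] by (auto intro: finite_subset)
  have "card (fq_sphere R d (c, r)) \<le> card {y \<in> V d. qf R y = r}"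
  proof (rule card_le_inj[where f="\<lambda>x. vsub R x c"])
    show "\<And>y. y \<in> fq_sphere R d (c, r) \<Longrightarrow> vsub R y c \<in> {y \<in> V d. qf R y = r}"
      using sphere_iff[OF c] vsub_V c by auto
    show "inj_on (\<lambda>x. vsub R x c) (fq_sphere R d (c, r))"
      by (rule inj_onI) (metis sphere_iff[OF c] vadd_vsub c)
    show "finite {y \<in> V d. qf R y = r}" using finV by simp
  qed
  moreover have "card {y \<in> V d. qf R y = r} \<le> card (fq_sphere R d (c, r))"
  proof (rule card_le_inj[where f="\<lambda>y. vadd R y c"])
    show "\<And>y. y \<in> {y \<in> V d. qf R y = r} \<Longrightarrow> vadd R y c \<in> fq_sphere R d (c, r)"
      using sphere_iff[OF c] vadd_V c vsub_vadd by auto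
    show "inj_on (\<lambda>y. vadd R y c) {y \<in> V d. qf R y = r}"
      by (rule inj_onI) (metis (no_types, lifting) mem_Collect_eq vsub_vadd c)
  qed (rule fin1)
  ultimately show ?thesis unfolding Nc_def by simp
qed

lemma sphere_size:
  assumes d: "d mod 4 = 3" and s: "s \<in> square_radius_spheres R d"
  shows "int (card (fq_sphere R d s)) \<le> int q ^ (d - 1)"
    and "int (card (fq_sphere R d s)) \<ge> int q ^ (d - 1) - int q ^ ((d - 1) div 2)"
proof -
  obtain c r rho where s': "s = (c, r)" "c \<in> V d" "rho \<in> carrier R" "r = rho \<otimes> rho"
    using s unfolding square_radius_spheres_def by auto
  have e: "card (fq_sphere R d s) = Nc d r" using sphere_card[OF s'(2)] s'(1) by simp
  have "int (Nc d r) = int q ^ (d - 1) \<or> int (Nc d r) = int q ^ (d - 1) - int q ^ ((d - 1) div 2)"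
  proof (cases "rho = \<zero>")
    case True then show ?thesis using sphere_count_0[OF d] s' by simp
  next
    case False then show ?thesis using sphere_count_sq[OF d s'(3) False] s' by simp
  qed
  note disj = this
  have e': "int (card (fq_sphere R d s)) = int (Nc d r)" using e by simp
  have p: "int q ^ ((d - 1) div 2) \<ge> 0" by simp
  show "int (card (fq_sphere R d s)) \<le> int q ^ (d - 1)"
    by (rule disjE[OF disj]) (use e' p in linarith)+
  show "int (card (fq_sphere R d s)) \<ge> int q ^ (d - 1) - int q ^ ((d - 1) div 2)"
    by (rule disjE[OF disj]) (use e' p in linarith)+
qed


lemma Nc_le: assumes d: "d mod 4 = 3" and rho: "rho \<in> carrier R"
  shows "int (Nc d (rho \<otimes> rho)) \<le> int q ^ (d - 1)"
proof (cases "rho = \<zero>")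
  case True then show ?thesis using sphere_count_0[OF d] by simp
next
  case False then show ?thesis using sphere_count_sq[OF d rho False] by simp
qed

lemma inter_bound:
  assumes d: "d mod 4 = 3" and s: "s \<in> square_radius_spheres R d"
    and s': "s' \<in> square_radius_spheres R d" and ne: "s \<noteq> s'"
  shows "int q * int (card (fq_sphere R d s \<inter> fq_sphere R d s')) \<le> int q ^ (d - 1) + int q ^ ((d - 1) div 2)"
proof -
  obtain c r rho where S: "s = (c, r)" "c \<in> V d" "rho \<in> carrier R" "r = rho \<otimes> rho"
    using s unfolding square_radius_spheres_def by auto
  obtain c' r' rho' where S': "s' = (c', r')" "c' \<in> V d" "rho' \<in> carrier R" "r' = rho' \<otimes> rho'"
    using s' unfolding square_radius_spheres_def by auto
  have rc: "r \<in> carrier R" "r' \<in> carrier R" using S S' by auto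
  have pos: "int q ^ ((d - 1) div 2) \<ge> 0" "int q ^ (d - 1) \<ge> 0" by simp_all
  have qpos: "int q > 0" using q_ge3 by simp
  let ?X = "fq_sphere R d s \<inter> fq_sphere R d s'"
  show ?thesis
  proof (cases "c = c'")
    case True
    then have "r \<noteq> r'" using ne S S' by simp
    then have "?X = {}" using sphere_iff[OF S(2)] sphere_iff[OF S'(2)] S S' True by auto
    then show ?thesis using pos by (simp only: card.empty of_nat_0 mult_zero_right)
  next
    case False
    define v where "v = vsub R c' c"
    have v: "v \<in> V d" unfolding v_def using vsub_V S S' by simp
    have vnz: "v \<noteq> replicate d \<zero>"
    proof
      assume "v = replicate d \<zero>"
      then have "c' = vadd R (replicate d \<zero>) c" using vadd_vsub[OF S'(2) S(2)] unfolding v_def by simp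
      then show False using vadd_zero[OF S(2)] False by simp
    qed
    define l where "l = qf R v"
    have lc: "l \<in> carrier R" unfolding l_def using qf_cl V_cl v by blast
    have two0: "two \<noteq> \<zero>" by (rule two_nz)
    define t where "t = (r \<ominus> r' \<oplus> l) \<otimes> inv two"
    have tc: "t \<in> carrier R" unfolding t_def using inv_cl[OF two_cl two0] rc lc by simp
    have t2: "r \<ominus> r' \<oplus> l = t \<otimes> two"
      using div_l[OF two_cl two0, of "r \<ominus> r' \<oplus> l" t] rc lc tc unfolding t_def by simp
    have cardX: "card ?X \<le> Kc d v r t"
      unfolding Kc_def
    proof (rule card_le_inj[where f="\<lambda>x. vsub R x c"])
      fix x assume x: "x \<in> ?X"
      have xV: "x \<in> V d" and q1: "qf R (vsub R x c) = r" and q2: "qf R (vsub R x c') = r'"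
        using x sphere_iff[OF S(2)] sphere_iff[OF S'(2)] S S' by auto
      define y where "y = vsub R x c"
      have y: "y \<in> V d" unfolding y_def using vsub_V xV S by simp
      have Dc: "dotp R y v \<in> carrier R" using dot_cl V_cl y v by blast
      have "qf R (vsub R y v) = r'" using q2 vsub_vsub[OF xV S(2) S'(2)] unfolding y_def v_def by simp
      then have e: "r \<ominus> two \<otimes> dotp R y v \<oplus> l = r'" using qf_vsub[OF y v] q1 unfolding y_def l_def by simp
      have "r \<ominus> r' \<oplus> l = r \<ominus> (r \<ominus> two \<otimes> dotp R y v \<oplus> l) \<oplus> l" unfolding e ..
      also have "\<dots> = dotp R y v \<otimes> two" using rc Dc lc by algebra
      finally have "dotp R y v \<otimes> two = t \<otimes> two" using t2 by simp
      then have "dotp R y v = t" using m_rcancel[OF two0 two_cl Dc tc] by simp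
      then show "vsub R x c \<in> {y \<in> V d. qf R y = r \<and> dotp R y v = t}" using y q1 unfolding y_def by simp
    next
      show "inj_on (\<lambda>x. vsub R x c) ?X"
        by (rule inj_onI) (metis IntD1 S(1) S(2) sphere_iff vadd_vsub)
      show "finite {y \<in> V d. qf R y = r \<and> dotp R y v = t}" using finV by simp
    qed
    have Kb: "int q * int (Kc d v r t) \<le> int q ^ (d - 1) + int q ^ ((d - 1) div 2)"
    proof (cases "l = \<zero>")
      case True
      have d1: "int q ^ d = int q * int q ^ (d - 1)" using d
        by (metis One_nat_def Suc_pred mod_less_eq_dividend not_gr0 not_numeral_le_zero power_Suc zero_less_numeral le_zero_eq)
      show ?thesis
      proof (cases "t = \<zero>")
        case False
        have "q * q * Kc d v r t = q ^ d" using iso_t_nz[OF v vnz _ rc(1) tc False] True l_def by simp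
        then have "int q * (int q * int (Kc d v r t)) = int q * int q ^ (d - 1)" using d1
          by (metis mult.assoc of_nat_mult of_nat_power)
        then have "int q * int (Kc d v r t) = int q ^ (d - 1)" using qpos by simp
        then show ?thesis using pos by linarith
      next
        case tz: True
        have "int q * int q * int (Kc d v r \<zero>) = int q * int q * int (Nc d r) - int (q - 1) * int q ^ d"
          using iso_t_0[OF v vnz _ rc(1)] True l_def by simp
        also have "\<dots> \<le> int q * int q * int q ^ (d - 1) - int (q - 1) * int q ^ d"
          using Nc_le[OF d S(3)] S(4) qpos by simp
        also have "\<dots> = int q * int q ^ (d - 1)" unfolding d1 using q_ge3 by (simp add: of_nat_diff algebra_simps)
        finally have "int q * (int q * int (Kc d v r t)) \<le> int q * int q ^ (d - 1)" using tz by (simp add: mult.assoc)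
        then have "int q * int (Kc d v r t) \<le> int q ^ (d - 1)" using qpos by simp
        then show ?thesis using pos by linarith
      qed
    next
      case False
      have l0: "qf R v \<noteq> \<zero>" using False l_def by simp
      define a where "a = r \<ominus> t \<otimes> t \<otimes> inv l"
      have il: "inv l \<in> carrier R" "inv l \<noteq> \<zero>" using inv_cl inv_nz lc False by auto
      have ac: "a \<in> carrier R" unfolding a_def using rc tc il by simp
      have K: "Kc d v r t = Kc d v a \<zero>" using aniso_reduce[OF v l0 rc(1) tc] unfolding a_def l_def by simp
      have cond: "a \<noteq> \<zero> \<or> qf R v \<in> Sq"
      proof (rule ccontr)
        assume "\<not> (a \<noteq> \<zero> \<or> qf R v \<in> Sq)"
        then have a0: "a = \<zero>" and ns: "l \<notin> Sq" using l_def by auto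
        have "t \<otimes> t \<otimes> inv l = r" using a0 unfolding a_def using rc tc il by (metis m_closed r_right_minus_eq)
        then have tt: "t \<otimes> t = r \<otimes> l" using div_l[OF lc False] rc tc by simp
        show False
        proof (cases "rho = \<zero>")
          case True
          then have "t \<otimes> t = \<zero>" using tt S(4) lc by simp
          then have "t = \<zero>" using tc integral_iff by auto
          then have "r \<ominus> r' \<oplus> l = \<zero>" using t2 by simp
          moreover have "r = \<zero>" using True S(4) by simp
          ultimately have "l = r'" using rc lc by (metis a_minus_def add.inv_closed add.r_inv_ex l_zero minus_equality r_zero add.m_comm)
          then show False using ns S'(3,4) sq_in_Sq by simp
        next
          case rho0: False
          have ir: "inv rho \<in> carrier R" "inv rho \<otimes> rho = \<one>" using inv_cl linv S(3) rho0 by auto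
          have "(t \<otimes> inv rho) \<otimes> (t \<otimes> inv rho) = (t \<otimes> t) \<otimes> (inv rho \<otimes> inv rho)" using tc ir(1) by algebra
          also have "\<dots> = (rho \<otimes> rho \<otimes> l) \<otimes> (inv rho \<otimes> inv rho)" using tt S(4) by simp
          also have "\<dots> = (inv rho \<otimes> rho) \<otimes> (inv rho \<otimes> rho) \<otimes> l" using S(3) ir(1) lc by algebra
          also have "\<dots> = l" using ir lc by simp
          finally show False using ns sq_in_Sq[of "t \<otimes> inv rho"] tc ir by simp
        qed
      qed
      show ?thesis using aniso_bound[OF d v l0 ac cond] K by simp
    qed
    have "int q * int (card ?X) \<le> int q * int (Kc d v r t)" using cardX qpos by simp
    then show ?thesis using Kb by linarith
  qed
qed

end


lemma cauchy_schwarz_sum: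
  fixes g :: "'a \<Rightarrow> real"
  assumes "finite A"
  shows "(\<Sum>x\<in>A. g x)\<^sup>2 \<le> real (card A) * (\<Sum>x\<in>A. (g x)\<^sup>2)"
proof (cases "card A = 0")
  case True then show ?thesis using assms by simp
next
  case False
  define n where "n = real (card A)"
  have n: "n > 0" using False n_def by simp
  define a where "a = (\<Sum>x\<in>A. g x) / n"
  have "0 \<le> (\<Sum>x\<in>A. (g x - a)\<^sup>2)" by (simp add: sum_nonneg)
  also have "\<dots> = (\<Sum>x\<in>A. (g x)\<^sup>2) - 2 * a * (\<Sum>x\<in>A. g x) + n * a\<^sup>2"
    by (simp add: power2_diff sum.distrib sum_subtractf sum_distrib_left[symmetric] sum_distrib_right[symmetric] n_def algebra_simps)
  also have "\<dots> = (\<Sum>x\<in>A. (g x)\<^sup>2) - (\<Sum>x\<in>A. g x)\<^sup>2 / n"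
    using n unfolding a_def by (simp add: power2_eq_square field_simps)
  finally have "(\<Sum>x\<in>A. g x)\<^sup>2 / n \<le> (\<Sum>x\<in>A. (g x)\<^sup>2)" by simp
  then show ?thesis using n unfolding n_def[symmetric] by (simp add: field_simps)
qed

context ffq begin

lemma finS: "finite (square_radius_spheres R d)"
proof -
  have "square_radius_spheres R d \<subseteq> V d \<times> carrier R" unfolding square_radius_spheres_def by auto
  then show ?thesis using finV finF by (auto intro: finite_subset)
qed

lemma sphere_sub: "s \<in> square_radius_spheres R d \<Longrightarrow> fq_sphere R d s \<subseteq> V d"
  unfolding fq_sphere_def by auto

lemma card_filter_real: "finite A \<Longrightarrow> real (card {x \<in> A. P x}) = (\<Sum>x\<in>A. if P x then 1 else 0)"
  by (simp add: sum.inter_filter[symmetric])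


lemma main_bound:
  assumes d: "d mod 4 = 3" and P: "P \<subseteq> V d" and S: "S \<subseteq> square_radius_spheres R d"
    and NP: "real (card P) \<le> N" and NS: "real (card S) \<le> N"
  shows "real (incidences R d P S) \<le> 3 * (N\<^sup>2 / real q + real q ^ ((d - 1) div 2) * N)"
proof -
  define m where "m = (d - 1) div 2"
  have dm: "d - 1 = 2 * m" unfolding m_def using d by presburger
  have d1: "d = Suc (d - 1)" using d by presburger
  define qr where "qr = real q"
  have qr: "qr > 0" "qr \<ge> 3" unfolding qr_def using q_ge3 by simp_all
  define Q1 where "Q1 = qr ^ (d - 1)"
  define M where "M = qr ^ m"
  have MQ: "M * M = Q1" unfolding M_def Q1_def dm by (simp add: power_add[symmetric] mult_2)
  have Mnn: "M \<ge> 0" unfolding M_def using qr by simp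
  have Q1nn: "Q1 \<ge> 0" unfolding Q1_def using qr by simp
  have finP: "finite P" using P finV by (auto intro: finite_subset)
  have finS': "finite S" using S finS by (auto intro: finite_subset)
  let ?sph = "fq_sphere R d"
  define ind where "ind s x = (if x \<in> ?sph s then 1 else 0 :: real)" for s x
  define f where "f x = real (card {s \<in> S. x \<in> ?sph s})" for x
  have f_ind: "f x = (\<Sum>s\<in>S. ind s x)" for x
    unfolding f_def ind_def using card_filter_real[OF finS'] by simp
  define sS where "sS = real (card S)"
  define sP where "sP = real (card P)"
  have sS0: "sS \<ge> 0" and sP0: "sP \<ge> 0" unfolding sS_def sP_def by simp_all
  have N0: "N \<ge> 0" using NP sP0 sP_def by simp
  have "{(p, s). p \<in> P \<and> s \<in> S \<and> p \<in> ?sph s} = Sigma P (\<lambda>p. {s \<in> S. p \<in> ?sph s})" by auto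
  then have I: "real (incidences R d P S) = (\<Sum>p\<in>P. f p)"
    unfolding incidences_def f_def using finP finS' by (simp add: card_SigmaI)
  have sub_s: "?sph s \<subseteq> V d" if "s \<in> S" for s using sphere_sub S that by blast
  have S1: "(\<Sum>x\<in>V d. f x) = (\<Sum>s\<in>S. real (card (?sph s)))"
  proof -
    have "(\<Sum>x\<in>V d. f x) = (\<Sum>s\<in>S. \<Sum>x\<in>V d. ind s x)" unfolding f_ind by (rule sum.swap)
    also have "\<dots> = (\<Sum>s\<in>S. real (card (?sph s)))"
    proof (intro sum.cong refl)
      fix s assume s: "s \<in> S"
      have "(\<Sum>x\<in>V d. ind s x) = real (card {x \<in> V d. x \<in> ?sph s})"
        unfolding ind_def using card_filter_real[OF finV] by simp
      also have "{x \<in> V d. x \<in> ?sph s} = ?sph s" using sub_s[OF s] by auto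
      finally show "(\<Sum>x\<in>V d. ind s x) = real (card (?sph s))" .
    qed
    finally show ?thesis .
  qed
  have S2: "(\<Sum>x\<in>V d. (f x)\<^sup>2) = (\<Sum>s\<in>S. \<Sum>s'\<in>S. real (card (?sph s \<inter> ?sph s')))"
  proof -
    have "(\<Sum>x\<in>V d. (f x)\<^sup>2) = (\<Sum>x\<in>V d. \<Sum>s\<in>S. \<Sum>s'\<in>S. ind s x * ind s' x)"
      unfolding f_ind power2_eq_square by (simp add: sum_product)
    also have "\<dots> = (\<Sum>s\<in>S. \<Sum>x\<in>V d. \<Sum>s'\<in>S. ind s x * ind s' x)" by (rule sum.swap)
    also have "\<dots> = (\<Sum>s\<in>S. \<Sum>s'\<in>S. \<Sum>x\<in>V d. ind s x * ind s' x)" by (intro sum.cong refl sum.swap)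
    also have "\<dots> = (\<Sum>s\<in>S. \<Sum>s'\<in>S. real (card (?sph s \<inter> ?sph s')))"
    proof (intro sum.cong refl)
      fix s s' assume s: "s \<in> S" and s': "s' \<in> S"
      have "(\<Sum>x\<in>V d. ind s x * ind s' x) = (\<Sum>x\<in>V d. if x \<in> ?sph s \<inter> ?sph s' then 1 else 0)"
        unfolding ind_def by (intro sum.cong refl) auto
      also have "\<dots> = real (card {x \<in> V d. x \<in> ?sph s \<inter> ?sph s'})"
        using card_filter_real[OF finV] by simp
      also have "{x \<in> V d. x \<in> ?sph s \<inter> ?sph s'} = ?sph s \<inter> ?sph s'" using sub_s[OF s] by auto
      finally show "(\<Sum>x\<in>V d. ind s x * ind s' x) = real (card (?sph s \<inter> ?sph s'))" .
    qed
    finally show ?thesis .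
  qed
  have B2: "(\<Sum>x\<in>V d. (f x)\<^sup>2) \<le> sS * (Q1 + sS * ((Q1 + M) / qr))"
  proof -
    have row: "(\<Sum>s'\<in>S. real (card (?sph s \<inter> ?sph s'))) \<le> Q1 + sS * ((Q1 + M) / qr)" if s: "s \<in> S" for s
    proof -
      have "(\<Sum>s'\<in>S. real (card (?sph s \<inter> ?sph s'))) = real (card (?sph s \<inter> ?sph s)) + (\<Sum>s'\<in>S - {s}. real (card (?sph s \<inter> ?sph s')))"
        by (rule sum.remove[OF finS' s])
      also have "real (card (?sph s \<inter> ?sph s)) \<le> Q1"
        using sphere_size(1)[OF d, of s] S s unfolding Q1_def qr_def by auto
      also have "(\<Sum>s'\<in>S - {s}. real (card (?sph s \<inter> ?sph s'))) \<le> real (card (S - {s})) * ((Q1 + M) / qr)"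
      proof (rule sum_bounded_above)
        fix s' assume s': "s' \<in> S - {s}"
        have "int q * int (card (?sph s \<inter> ?sph s')) \<le> int q ^ (d - 1) + int q ^ ((d - 1) div 2)"
          using inter_bound[OF d, of s s'] S s s' by auto
        then have "real_of_int (int q * int (card (?sph s \<inter> ?sph s'))) \<le> real_of_int (int q ^ (d - 1) + int q ^ ((d - 1) div 2))"
          by (simp only: of_int_le_iff)
        then have "qr * real (card (?sph s \<inter> ?sph s')) \<le> Q1 + M"
          unfolding qr_def Q1_def M_def m_def by simp
        then show "real (card (?sph s \<inter> ?sph s')) \<le> (Q1 + M) / qr" using qr by (simp add: field_simps)
      qed
      also have "real (card (S - {s})) * ((Q1 + M) / qr) \<le> sS * ((Q1 + M) / qr)"
        using card_Diff1_le[of S s] qr Q1nn Mnn unfolding sS_def by (intro mult_right_mono) auto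
      finally show ?thesis by simp
    qed
    have "(\<Sum>s\<in>S. \<Sum>s'\<in>S. real (card (?sph s \<inter> ?sph s'))) \<le> real (card S) * (Q1 + sS * ((Q1 + M) / qr))"
      using row by (rule sum_bounded_above)
    then show ?thesis using S2 unfolding sS_def by simp
  qed
  have B1: "(\<Sum>x\<in>V d. f x) \<ge> sS * (Q1 - M)"
  proof -
    have "real (card S) * (Q1 - M) \<le> (\<Sum>s\<in>S. real (card (?sph s)))"
    proof (rule sum_bounded_below)
      fix s assume s: "s \<in> S"
      have "int (card (?sph s)) \<ge> int q ^ (d - 1) - int q ^ ((d - 1) div 2)"
        using sphere_size(2)[OF d, of s] S s by auto
      then have "real_of_int (int q ^ (d - 1) - int q ^ ((d - 1) div 2)) \<le> real_of_int (int (card (?sph s)))"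
        by (simp only: of_int_le_iff)
      then show "Q1 - M \<le> real (card (?sph s))"
        unfolding qr_def Q1_def M_def m_def by simp
    qed
    then show ?thesis using S1 unfolding sS_def by simp
  qed
  define mu where "mu = sS / qr"
  have mu0: "mu \<ge> 0" unfolding mu_def using sS0 qr by simp
  have cV: "real (card (V d)) = qr * Q1" unfolding qr_def Q1_def using cardV d1
    by (metis of_nat_power power_Suc)
  have Var: "(\<Sum>x\<in>V d. (f x - mu)\<^sup>2) = (\<Sum>x\<in>V d. (f x)\<^sup>2) - 2 * mu * (\<Sum>x\<in>V d. f x) + qr * Q1 * mu\<^sup>2"
    by (simp add: power2_diff sum.distrib sum_subtractf sum_distrib_left[symmetric] sum_distrib_right[symmetric] cV algebra_simps)
  have "(\<Sum>x\<in>V d. (f x - mu)\<^sup>2) \<le> sS * (Q1 + sS * ((Q1 + M) / qr)) - 2 * mu * (sS * (Q1 - M)) + qr * Q1 * mu\<^sup>2"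
    unfolding Var using B1 B2 mu0 by (smt (verit) mult_left_mono)
  also have "\<dots> = sS * Q1 + 3 * sS * sS * M / qr"
    unfolding mu_def using qr by (simp add: field_simps power2_eq_square)
  finally have VarB: "(\<Sum>x\<in>V d. (f x - mu)\<^sup>2) \<le> sS * Q1 + 3 * sS * sS * M / qr" .
  define E where "E = (\<Sum>p\<in>P. f p - mu)"
  have "E\<^sup>2 \<le> sP * (\<Sum>p\<in>P. (f p - mu)\<^sup>2)"
    unfolding E_def sP_def by (rule cauchy_schwarz_sum[OF finP])
  also have "(\<Sum>p\<in>P. (f p - mu)\<^sup>2) \<le> (\<Sum>x\<in>V d. (f x - mu)\<^sup>2)"
    by (rule sum_mono2[OF finV P]) simp
  then have "sP * (\<Sum>p\<in>P. (f p - mu)\<^sup>2) \<le> sP * (sS * Q1 + 3 * sS * sS * M / qr)"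
    using VarB sP0 by (intro mult_left_mono) auto
  also have "\<dots> \<le> N * (N * Q1 + 3 * N * N * M / qr)"
  proof -
    have "sS * Q1 \<le> N * Q1" using NS Q1nn unfolding sS_def by (intro mult_right_mono)
    moreover have "sS * sS \<le> N * N" using NS sS0 unfolding sS_def by (intro mult_mono) auto
    then have "3 * (sS * sS) * M \<le> 3 * (N * N) * M" using Mnn
      by (intro mult_right_mono mult_left_mono) auto
    then have "3 * (sS * sS) * M / qr \<le> 3 * (N * N) * M / qr" using qr
      by (intro divide_right_mono) auto
    then have "3 * sS * sS * M / qr \<le> 3 * N * N * M / qr" by (simp only: mult.assoc)
    ultimately have "sS * Q1 + 3 * sS * sS * M / qr \<le> N * Q1 + 3 * N * N * M / qr" by simp
    moreover have "0 \<le> sS * Q1 + 3 * sS * sS * M / qr" using sS0 Q1nn Mnn qr by simp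
    ultimately show ?thesis using NP sP0 unfolding sP_def by (intro mult_mono) auto
  qed
  finally have E2: "E\<^sup>2 \<le> N * (N * Q1 + 3 * N * N * M / qr)" .
  define A where "A = N\<^sup>2 / qr"
  define B where "B = N * M"
  have A0: "A \<ge> 0" and B0: "B \<ge> 0" unfolding A_def B_def using N0 Mnn qr by simp_all
  have "N * (N * Q1 + 3 * N * N * M / qr) = B\<^sup>2 + 3 * A * B"
    unfolding A_def B_def MQ[symmetric] using qr by (simp add: field_simps power2_eq_square)
  also have "\<dots> \<le> (B + 2 * A)\<^sup>2" using A0 B0 by (simp add: power2_eq_square algebra_simps)
  finally have F: "N * (N * Q1 + 3 * N * N * M / qr) \<le> (B + 2 * A)\<^sup>2" .
  have "E\<^sup>2 \<le> (B + 2 * A)\<^sup>2" using E2 F by (rule order_trans)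
  have "0 \<le> B + 2 * A" using A0 B0 by linarith
  then have EB: "E \<le> B + 2 * A" using power2_le_imp_le \<open>E\<^sup>2 \<le> (B + 2 * A)\<^sup>2\<close> by blast
  have "(\<Sum>p\<in>P. f p) = sP * mu + E" unfolding E_def sP_def by (simp add: sum_subtractf)
  moreover have "sP * mu \<le> A"
  proof -
    have "sP * sS \<le> N * N" using NP NS sP0 sS0 unfolding sP_def sS_def by (intro mult_mono) auto
    then show ?thesis unfolding mu_def A_def using qr by (simp add: power2_eq_square divide_right_mono)
  qed
  ultimately have "real (incidences R d P S) \<le> 3 * A + B" using I EB by simp
  also have "\<dots> \<le> 3 * (A + B)" using B0 by simp
  finally show ?thesis unfolding A_def B_def M_def qr_def m_def by (simp add: mult.commute)
qed

end


theorem theorem1p4: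
  "\<exists>C::real. C > 0 \<and>
    (\<forall>(R :: nat ring) (d::nat) (P :: nat list set) (S :: (nat list \<times> nat) set) (N::real).
       field R \<and> finite (carrier R) \<and>
       (\<exists>p k. Factorial_Ring.prime (p::nat) \<and> odd p \<and> k > 0 \<and> card (carrier R) = p ^ k) \<and>
       card (carrier R) mod 4 = 3 \<and>
       d > 0 \<and> d mod 4 = 3 \<and>
       P \<subseteq> fq_space R d \<and> S \<subseteq> square_radius_spheres R d \<and>
       real (card P) \<le> N \<and> real (card S) \<le> N
       \<longrightarrow> real (incidences R d P S)
             \<le> C * (N ^ 2 / real (card (carrier R))
                    + real (card (carrier R)) powr ((real d - 1) / 2) * N))"
proof (intro exI[of _ "3::real"] conjI allI impI)
  show "(3::real) > 0" by simp
  fix R :: "nat ring" and d :: nat and P :: "nat list set" and S :: "(nat list \<times> nat) set" and N :: real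
  assume H: "field R \<and> finite (carrier R) \<and>
       (\<exists>p k. Factorial_Ring.prime (p::nat) \<and> odd p \<and> k > 0 \<and> card (carrier R) = p ^ k) \<and>
       card (carrier R) mod 4 = 3 \<and>
       d > 0 \<and> d mod 4 = 3 \<and>
       P \<subseteq> fq_space R d \<and> S \<subseteq> square_radius_spheres R d \<and>
       real (card P) \<le> N \<and> real (card S) \<le> N"
  have "ffq R" unfolding ffq_def ffq_axioms_def using H by simp
  then interpret F: ffq R .
  have d: "d mod 4 = 3" using H by simp
  have k: "d = 2 * ((d - 1) div 2) + 1" using d by presburger
  have "real d = real (2 * ((d - 1) div 2) + 1)" using arg_cong[OF k, of real] .
  then have "real d = 2 * real ((d - 1) div 2) + 1" by simp
  then have e: "(real d - 1) / 2 = real ((d - 1) div 2)" by simp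
  have qpos: "real (card (carrier R)) > 0" using F.q_ge3 by simp
  have "real (card (carrier R)) powr ((real d - 1) / 2) = real (card (carrier R)) ^ ((d - 1) div 2)"
    unfolding e using qpos by (simp add: powr_realpow)
  then show "real (incidences R d P S)
             \<le> 3 * (N ^ 2 / real (card (carrier R))
                    + real (card (carrier R)) powr ((real d - 1) / 2) * N)"
    using F.main_bound[OF d, of P S N] H by simp
qed


end
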